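(* Let $A\in\mathbb{R}^{n\times n}$, $B\in\mathbb{R}^{n\times m}$, $C\in\mathbb{R}^{p\times n}$, $\bar T>0$. Let $\hat A, \hat B, \hat C$ be reduced matrices computed by the time-limited IRKA-type algorithm, in the following sense: $\hat A=S^{-1}DS$ with $D=\operatorname{diag}(\lambda_1,\dots,\lambda_r)$, $\tilde B=S\hat B$, $\tilde C=\hat CS^{-1}$, and there are $V,W\in\mathbb{C}^{n\times r}$ with $W^TV$ invertible such that $$-VD-AV=B\tilde B^T-e^{A\bar T}B\tilde B^Te^{D\bar T},\qquad -WD-A^TW=C^T\tilde C-e^{A^T\bar T}C^T\tilde Ce^{D\bar T},$$ $$\hat A=(W^TV)^{-1}W^TAV,\qquad \hat B=(W^TV)^{-1}W^TB,\qquad \hat C=CV.$$ Assume all matrix inverses below exist. Set $\operatorname{Pr}:=V(W^TV)^{-1}W^T$. Then: (a) $L_c-R_c=E_c$, where $L_c:=(I\otimes \hat C) \left[(I\otimes \hat A)+(D\otimes I)\right]^{-1}(e^{D \bar T}\tilde B \otimes e^{\hat A \bar T}\hat B -\tilde B \otimes \hat B) \operatorname{vec}(I)$, $R_c:=(I\otimes C) \left[(I\otimes A)+(D\otimes I)\right]^{-1} (e^{D \bar T}\tilde B \otimes e^{ A \bar T} B -\tilde B \otimes B) \operatorname{vec}(I)$ and $$E_c = (I\otimes \hat C) \left[(I\otimes \hat A)+(D\otimes I)\right]^{-1}\big(e^{D \bar T}\tilde B \otimes (W^TV)^{-1}W^T(e^{A \operatorname{Pr}\bar T}-e^{A \bar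 T}) B \big) \operatorname{vec}(I).$$ (b) $L_b-R_b=E_b$, where $L_b:=(\hat B^T\otimes I) \left[(I\otimes D)+(\hat A^T\otimes I)\right]^{-1}(e^{\hat A^T \bar T}\hat C^T \otimes e^{D \bar T}\tilde C^T-\hat C^T \otimes \tilde C^T)\operatorname{vec}(I)$, $R_b:=(B^T\otimes I) \left[(I\otimes D)+(A^T\otimes I)\right]^{-1}(e^{A^T \bar T} C^T \otimes e^{D \bar T}\tilde C^T-C^T \otimes \tilde C^T)\operatorname{vec}(I)$ and $$E_b = (\hat B^T\otimes I) \left[(I\otimes D)+(\hat A^T\otimes I)\right]^{-1}\big(V^T(e^{ A^T \operatorname{Pr}^T \bar T}-e^{ A^T \bar T})C^T \otimes e^{D \bar T}\tilde C^T\big)\operatorname{vec}(I).$$ (c) For all $i=1,\ldots,r$, $L_\lambda^i-R_\lambda^i=E_{\lambda,1}^i+E_{\lambda,2}^i$, where $$L_\lambda^i:=\operatorname{vec}^T(I) (\hat C \otimes \tilde C) \hat K_2^{-1} (I\otimes e_i e_i^T)\Big( \hat K_2^{-1} (e^{\hat A \bar T}\hat B \otimes e^{D \bar T}\tilde B -\hat B \otimes \tilde B)- (\bar Te^{\hat A \bar T}\hat B \otimes e^{D \bar T}\tilde B) \Big)\operatorname{vec}(I),$$ $$R_\lambda^i:=\operatorname{vec}^T(I) ( C \otimes \tilde C) K_2^{-1} (I\otimes e_i e_i^T)\Big( K_2^{-1} (e^{A \bar T} B \otimes e^{D \bar T}\tilde B -B \otimes \tilde B)-(\bar Te^{A \bar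 T}B \otimes e^{D \bar T}\tilde B)\Big) \operatorname{vec}(I),$$ $$E_{\lambda, 1}^i=\operatorname{vec}^T(I) (\hat C \otimes \tilde C) \hat K_2^{-1} (I\otimes e_i e_i^T)\Big( \hat K_2^{-1} \big((W^TV)^{-1} W^T(e^{A \operatorname{Pr} \bar T}-e^{A \bar T}) B \otimes e^{D \bar T}\tilde B\big)-\big(\bar T(W^TV)^{-1} W^T(e^{A \operatorname{Pr}\bar T}-e^{A \bar T}) B \otimes e^{D \bar T}\tilde B\big)\Big) \operatorname{vec}(I),$$ $$E_{\lambda, 2}^i=\operatorname{vec}^T(I) (C e^{A \bar T} \otimes \tilde C e^{D \bar T})\left[(V\otimes I) \hat K_2^{-1} ((W^T V)^{-1}W^T \otimes I)- K_2^{-1}\right](I\otimes e_i e_i^T)\left[K_2^{-1} (e^{A \bar T} B \otimes e^{D \bar T}\tilde B - B \otimes \tilde B)-(\bar Te^{A \bar T} B \otimes e^{D \bar T}\tilde B)\right]\operatorname{vec}(I),$$ with $\hat K_2:=(I\otimes D)+(\hat A\otimes I)$ and $K_2:=(I\otimes D)+(A\otimes I)$.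
   Context: $e_i$ is the $i$-th column of an identity matrix, $I$ denotes identity matrices of suitable sizes, $\otimes$ is the Kronecker product, $\operatorname{vec}$ stacks the columns of a matrix into a vector and $\operatorname{vec}^T(I)=(\operatorname{vec}(I))^T$; transposes are plain transposes. The time-limited IRKA-type algorithm iterates: given $\hat A,\hat B,\hat C$, diagonalize $D=S\hat AS^{-1}$, set $\tilde B=S\hat B$, $\tilde C=\hat CS^{-1}$, solve the two Sylvester equations displayed in the claim for $V$ and $W$, orthogonalize $V,W$, and set $\hat A=(W^TV)^{-1}W^TAV$, $\hat B=(W^TV)^{-1}W^TB$, $\hat C=CV$. The quantities $L_c,R_c$, $L_b,R_b$, $L_\lambda^i,R_\lambda^i$ are the two sides of the Kronecker-form first-order necessary optimality conditions for the time-limited $\mathcal H_2$ model reduction problem. *)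

theory Defs
  imports Complex_Main "Jordan_Normal_Form.Matrix" "Jordan_Normal_Form.Gauss_Jordan_Elimination"
begin

definition kron :: "'a::times mat \<Rightarrow> 'a mat \<Rightarrow> 'a mat" where
  "kron X Y = mat (dim_row X * dim_row Y) (dim_col X * dim_col Y)
     (\<lambda>(i,j). X $$ (i div dim_row Y, j div dim_col Y) * Y $$ (i mod dim_row Y, j mod dim_col Y))"

(* vec: stacks the columns of a matrix into a column vector (as a (rows*cols) x 1 matrix) *)
definition vecm :: "'a mat \<Rightarrow> 'a mat" where
  "vecm X = mat (dim_row X * dim_col X) 1 (\<lambda>(k,_). X $$ (k mod dim_row X, k div dim_row X))"

definition minv :: "'a::field mat \<Rightarrow> 'a mat" where
  "minv X = the (mat_inverse X)"

definition mexp :: "complex mat \<Rightarrow> complex mat" where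
  "mexp X = mat (dim_row X) (dim_row X) (\<lambda>(i,j). \<Sum>k. (X ^\<^sub>m k) $$ (i,j) / of_nat (fact k))"

(* i-th column of the r x r identity, as an r x 1 matrix (0-based index) *)
definition unitcol :: "nat \<Rightarrow> nat \<Rightarrow> complex mat" where
  "unitcol r i = mat r 1 (\<lambda>(k,_). if k = i then 1 else 0)"

definition diagm :: "nat \<Rightarrow> (nat \<Rightarrow> complex) \<Rightarrow> complex mat" where
  "diagm r lam = mat r r (\<lambda>(i,j). if i = j then lam i else 0)"

abbreviation cmat :: "real mat \<Rightarrow> complex mat" where
  "cmat X \<equiv> map_mat complex_of_real X"

end

theory Submission
  imports Defs
begin

lemma sum_divmod: fixes b d :: nat shows "(\<Sum>l<b*d. f (l div d) (l mod d)) = (\<Sum>j<b. \<Sum>q<d. f j q)"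
proof (induction b)
  case 0 then show ?case by simp
next
  case (Suc b)
  have "{..<Suc b * d} = {..<b*d} \<union> {b*d..<b*d+d}" by auto
  then have "(\<Sum>l<Suc b*d. f (l div d) (l mod d)) = (\<Sum>l<b*d. f (l div d) (l mod d)) + (\<Sum>l\<in>{b*d..<b*d+d}. f (l div d) (l mod d))"
    by (metis (no_types, lifting) ivl_disj_int_one(2) finite_atLeastLessThan finite_lessThan lessThan_atLeast0 sum.union_disjoint)
  also have "(\<Sum>l\<in>{b*d..<b*d+d}. f (l div d) (l mod d)) = (\<Sum>q<d. f b q)"
  proof -
    have "(\<Sum>l\<in>{b*d..<b*d+d}. f (l div d) (l mod d)) = (\<Sum>q<d. f ((q + b*d) div d) ((q+b*d) mod d))"
      by (rule sum.reindex_bij_witness[of _ "\<lambda>q. q + b*d" "\<lambda>l. l - b*d"]) auto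
    also have "\<dots> = (\<Sum>q<d. f b q)" by (rule sum.cong) auto
    finally show ?thesis .
  qed
  finally show ?case using Suc by simp
qed
lemma mult_entry: "A \<in> carrier_mat a b \<Longrightarrow> B \<in> carrier_mat b c \<Longrightarrow> i < a \<Longrightarrow> j < c \<Longrightarrow>
  (A*B) $$ (i,j) = (\<Sum>k<b. A $$ (i,k) * B $$ (k,j))"
  by (auto simp: scalar_prod_def lessThan_atLeast0 intro!: sum.cong)

lemma kron_carrier: "X \<in> carrier_mat a b \<Longrightarrow> Y \<in> carrier_mat c d \<Longrightarrow> kron X Y \<in> carrier_mat (a*c) (b*d)"
  by (auto simp: kron_def)

lemma kron_index: "X \<in> carrier_mat a b \<Longrightarrow> Y \<in> carrier_mat c d \<Longrightarrow> i < a*c \<Longrightarrow> j < b*d \<Longrightarrow>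
  kron X Y $$ (i,j) = X $$ (i div c, j div d) * Y $$ (i mod c, j mod d)"
  by (auto simp: kron_def)

lemma div_bound: "(i::nat) < a*c \<Longrightarrow> i div c < a"
  by (simp add: less_mult_imp_div_less)
lemma mod_bound: "(i::nat) < a*c \<Longrightarrow> i mod c < c"
  by (metis mod_less_divisor mult_0_right neq0_conv not_less0)
lemma div_bound': "(i::nat) < c*a \<Longrightarrow> i div c < a"
  by (simp add: less_mult_imp_div_less mult.commute)
lemma mod_bound': "(i::nat) < c*a \<Longrightarrow> i mod c < c"
  by (metis mod_bound mult.commute)

lemma kron_mult:
  fixes X :: "'a::comm_ring_1 mat"
  assumes X: "X \<in> carrier_mat a b" and Y: "Y \<in> carrier_mat c d"
    and X': "X' \<in> carrier_mat b e" and Y': "Y' \<in> carrier_mat d f"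
  shows "kron X Y * kron X' Y' = kron (X*X') (Y*Y')"
proof (rule eq_matI)
  have K1: "kron X Y \<in> carrier_mat (a*c) (b*d)" using X Y by (rule kron_carrier)
  have K2: "kron X' Y' \<in> carrier_mat (b*d) (e*f)" using X' Y' by (rule kron_carrier)
  have K3: "kron (X*X') (Y*Y') \<in> carrier_mat (a*c) (e*f)" using X Y X' Y' by (intro kron_carrier) auto
  show "dim_row (kron X Y * kron X' Y') = dim_row (kron (X * X') (Y * Y'))" using K1 K3 by simp
  show "dim_col (kron X Y * kron X' Y') = dim_col (kron (X * X') (Y * Y'))" using K2 K3 by simp
  fix i j assume "i < dim_row (kron (X * X') (Y * Y'))" "j < dim_col (kron (X * X') (Y * Y'))"
  then have i: "i < a*c" and j: "j < e*f" using K3 by auto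
  have "(kron X Y * kron X' Y') $$ (i,j) = (\<Sum>l<b*d. kron X Y $$ (i,l) * kron X' Y' $$ (l,j))"
    by (rule mult_entry[OF K1 K2 i j])
  also have "\<dots> = (\<Sum>l<b*d. (\<lambda>u v. X $$ (i div c, u) * Y $$ (i mod c, v) * (X' $$ (u, j div f) * Y' $$ (v, j mod f))) (l div d) (l mod d))"
    apply (rule sum.cong, simp)
    using X Y X' Y' i j by (simp add: kron_index div_bound mod_bound ac_simps)
  also have "\<dots> = (\<Sum>u<b. \<Sum>v<d. X $$ (i div c, u) * Y $$ (i mod c, v) * (X' $$ (u, j div f) * Y' $$ (v, j mod f)))"
    by (rule sum_divmod)
  also have "\<dots> = (\<Sum>u<b. X $$ (i div c, u) * X' $$ (u, j div f)) * (\<Sum>v<d. Y $$ (i mod c, v) * Y' $$ (v, j mod f))"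
    unfolding sum_product by (intro sum.cong refl) (simp add: ac_simps)
  also have "\<dots> = (X*X') $$ (i div c, j div f) * (Y*Y') $$ (i mod c, j mod f)"
    by (simp only: mult_entry[OF X X' div_bound[OF i] div_bound[OF j]] mult_entry[OF Y Y' mod_bound[OF i] mod_bound[OF j]])
  also have "\<dots> = kron (X*X') (Y*Y') $$ (i,j)"
    using X Y X' Y' i j by (subst kron_index) auto
  finally show "(kron X Y * kron X' Y') $$ (i,j) = kron (X*X') (Y*Y') $$ (i,j)" .
qed

lemma vecm_carrier: "M \<in> carrier_mat a b \<Longrightarrow> vecm M \<in> carrier_mat (a*b) 1"
  by (auto simp: vecm_def)

lemma vecm_index: "M \<in> carrier_mat a b \<Longrightarrow> k < a*b \<Longrightarrow> vecm M $$ (k,0) = M $$ (k mod a, k div a)"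
  by (auto simp: vecm_def)

lemma kron_vec:
  fixes X :: "'a::comm_ring_1 mat"
  assumes X: "X \<in> carrier_mat a b" and Y: "Y \<in> carrier_mat c d" and M: "M \<in> carrier_mat d b"
  shows "kron X Y * vecm M = vecm (Y * M * transpose_mat X)"
proof (rule eq_matI)
  have K1: "kron X Y \<in> carrier_mat (a*c) (b*d)" using X Y by (rule kron_carrier)
  have V1: "vecm M \<in> carrier_mat (b*d) 1" using vecm_carrier[OF M] by (simp add: mult.commute)
  have YMX: "Y * M * transpose_mat X \<in> carrier_mat c a" using X Y M by auto
  have V2: "vecm (Y * M * transpose_mat X) \<in> carrier_mat (a*c) 1" using vecm_carrier[OF YMX] by (simp add: mult.commute)
  show "dim_row (kron X Y * vecm M) = dim_row (vecm (Y * M * transpose_mat X))" using K1 V2 by simp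
  show "dim_col (kron X Y * vecm M) = dim_col (vecm (Y * M * transpose_mat X))" using V1 V2 by simp
  fix i j assume "i < dim_row (vecm (Y * M * transpose_mat X))" "j < dim_col (vecm (Y * M * transpose_mat X))"
  then have i: "i < a*c" and j: "j = 0" using V2 by auto
  have i': "i < c*a" using i by (simp add: mult.commute)
  have "(kron X Y * vecm M) $$ (i,j) = (\<Sum>l<b*d. kron X Y $$ (i,l) * vecm M $$ (l,0))"
    using mult_entry[OF K1 V1 i] j by simp
  also have "\<dots> = (\<Sum>l<b*d. (\<lambda>u v. X $$ (i div c, u) * Y $$ (i mod c, v) * M $$ (v, u)) (l div d) (l mod d))"
    apply (rule sum.cong, simp)
    using X Y M i by (simp add: kron_index vecm_index div_bound mod_bound ac_simps)
  also have "\<dots> = (\<Sum>u<b. \<Sum>v<d. X $$ (i div c, u) * Y $$ (i mod c, v) * M $$ (v, u))"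
    by (rule sum_divmod)
  also have "\<dots> = (\<Sum>u<b. (\<Sum>v<d. Y $$ (i mod c, v) * M $$ (v, u)) * transpose_mat X $$ (u, i div c))"
    using X i by (intro sum.cong refl) (simp add: sum_distrib_left sum_distrib_right ac_simps div_bound)
  also have "\<dots> = (Y * M * transpose_mat X) $$ (i mod c, i div c)"
    using X Y M i
    apply (subst mult_entry[of _ c b _ a])
    apply (auto simp: div_bound mod_bound intro!: sum.cong)
    using mod_bound[OF i] by (auto simp: scalar_prod_def lessThan_atLeast0 intro!: sum.cong)
  also have "\<dots> = vecm (Y * M * transpose_mat X) $$ (i,j)"
    using vecm_index[OF YMX i'] j by simp
  finally show "(kron X Y * vecm M) $$ (i,j) = vecm (Y * M * transpose_mat X) $$ (i,j)" .
qed

lemma vecm_minus: "M \<in> carrier_mat a b \<Longrightarrow> N \<in> carrier_mat a b \<Longrightarrow> vecm (M - N) = vecm M - vecm N"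
  by (rule eq_matI) (auto simp: vecm_def div_bound' mod_bound')
lemma vecm_plus: "M \<in> carrier_mat a b \<Longrightarrow> N \<in> carrier_mat a b \<Longrightarrow> vecm (M + N) = vecm M + vecm N"
  by (rule eq_matI) (auto simp: vecm_def div_bound' mod_bound')

lemma kron_transpose: "X \<in> carrier_mat a b \<Longrightarrow> Y \<in> carrier_mat c d \<Longrightarrow>
  transpose_mat (kron X Y) = kron (transpose_mat X) (transpose_mat Y)"
  by (rule eq_matI) (auto simp: kron_def div_bound mod_bound)
lemma minv_props:
  fixes K :: "'a::field mat"
  assumes K: "K \<in> carrier_mat N N" and inv: "invertible_mat K"
  shows "minv K \<in> carrier_mat N N" "K * minv K = 1\<^sub>m N" "minv K * K = 1\<^sub>m N"
proof -
  from inv obtain B where B1: "K * B = 1\<^sub>m (dim_row K)" and B2: "B * K = 1\<^sub>m (dim_row B)"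
    unfolding invertible_mat_def inverts_mat_def by auto
  have "dim_col B = N" using arg_cong[OF B1, of dim_col] K by simp
  moreover have "dim_row B = N" using arg_cong[OF B2, of dim_col] K by simp
  ultimately have Bc: "B \<in> carrier_mat N N" by auto
  have U: "K \<in> Units (ring_mat TYPE('a) N ())"
    using K Bc B1 B2 \<open>dim_row B = N\<close> unfolding Units_def ring_mat_def by auto
  have "mat_inverse K \<noteq> None" using mat_inverse(1)[OF K, where b="()"] U by blast
  then obtain B' where "mat_inverse K = Some B'" by auto
  then have "K * B' = 1\<^sub>m N \<and> B' * K = 1\<^sub>m N \<and> B' \<in> carrier_mat N N" "minv K = B'"
    using mat_inverse(2)[OF K] by (auto simp: minv_def)
  then show "minv K \<in> carrier_mat N N" "K * minv K = 1\<^sub>m N" "minv K * K = 1\<^sub>m N" by auto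
qed

lemma mexp_carrier: "X \<in> carrier_mat k k \<Longrightarrow> mexp X \<in> carrier_mat k k"
  by (auto simp: mexp_def)

lemma mexp_index: "X \<in> carrier_mat k k \<Longrightarrow> i < k \<Longrightarrow> j < k \<Longrightarrow>
   mexp X $$ (i,j) = (\<Sum>t. (X ^\<^sub>m t) $$ (i,j) / of_nat (fact t))"
  by (auto simp: mexp_def)

lemma pow_entry_bound:
  fixes X :: "complex mat"
  assumes X: "X \<in> carrier_mat k k"
  shows "i < k \<Longrightarrow> j < k \<Longrightarrow> norm ((X ^\<^sub>m t) $$ (i,j)) \<le> (\<Sum>a<k. \<Sum>b<k. norm (X $$ (a,b))) ^ t"
proof (induction t arbitrary: j)
  case 0 then show ?case using X by auto
next
  case (Suc t)
  define N where "N = (\<Sum>a<k. \<Sum>b<k. norm (X $$ (a,b)))"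
  have N0: "N \<ge> 0" unfolding N_def by (intro sum_nonneg) auto
  have col: "(\<Sum>b<k. norm (X $$ (b,j))) \<le> N"
  proof -
    have "(\<Sum>b<k. norm (X $$ (b,j))) \<le> (\<Sum>b<k. \<Sum>a<k. norm (X $$ (b,a)))"
      by (intro sum_mono member_le_sum) (auto simp: Suc.prems)
    also have "\<dots> = N" unfolding N_def ..
    finally show ?thesis .
  qed
  have "(X ^\<^sub>m Suc t) $$ (i,j) = (\<Sum>b<k. (X ^\<^sub>m t) $$ (i,b) * X $$ (b,j))"
    unfolding pow_mat.simps(2) using X Suc.prems by (intro mult_entry[where b=k]) auto
  then have "norm ((X ^\<^sub>m Suc t) $$ (i,j)) \<le> (\<Sum>b<k. norm ((X ^\<^sub>m t) $$ (i,b)) * norm (X $$ (b,j)))"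
    by (metis (no_types, lifting) norm_mult norm_sum sum.cong)
  also have "\<dots> \<le> (\<Sum>b<k. N ^ t * norm (X $$ (b,j)))"
    using Suc.IH Suc.prems unfolding N_def by (intro sum_mono mult_right_mono) auto
  also have "\<dots> = N^t * (\<Sum>b<k. norm (X $$ (b,j)))" by (simp add: sum_distrib_left)
  also have "\<dots> \<le> N^t * N" using col N0 by (intro mult_left_mono) auto
  finally show ?case unfolding N_def by (simp add: mult.commute)
qed

lemma pow_entry_summable:
  fixes X :: "complex mat"
  assumes X: "X \<in> carrier_mat k k" and i: "i < k" and j: "j < k"
  shows "summable (\<lambda>t. (X ^\<^sub>m t) $$ (i,j) / of_nat (fact t))"
proof -
  define N where "N = (\<Sum>a<k. \<Sum>b<k. norm (X $$ (a,b)))"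
  have g: "summable (\<lambda>t. inverse (fact t) * N ^ t)" by (rule summable_exp)
  show ?thesis
  proof (rule summable_comparison_test'[OF g])
    fix t :: nat
    have "norm ((X ^\<^sub>m t) $$ (i,j) / of_nat (fact t)) = norm ((X ^\<^sub>m t) $$ (i,j)) / fact t"
      by (simp add: norm_divide)
    also have "\<dots> \<le> N ^ t / fact t"
      using pow_entry_bound[OF X i j, of t] unfolding N_def by (intro divide_right_mono) auto
    finally show "norm ((X ^\<^sub>m t) $$ (i,j) / of_nat (fact t)) \<le> inverse (fact t) * N ^ t"
      by (simp add: field_simps)
  qed
qed

lemma mexp_mult_right:
  fixes Z :: "complex mat"
  assumes Z: "Z \<in> carrier_mat k k" and R: "R \<in> carrier_mat k l" and i: "i < k" and j: "j < l"
  shows "(mexp Z * R) $$ (i,j) = (\<Sum>t. (Z ^\<^sub>m t * R) $$ (i,j) / of_nat (fact t))"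
proof -
  have "(mexp Z * R) $$ (i,j) = (\<Sum>a<k. mexp Z $$ (i,a) * R $$ (a,j))"
    using mexp_carrier[OF Z] R i j by (rule mult_entry)
  also have "\<dots> = (\<Sum>a<k. \<Sum>t. (Z ^\<^sub>m t) $$ (i,a) / of_nat (fact t) * R $$ (a,j))"
  proof (intro sum.cong refl)
    fix a assume "a \<in> {..<k}" then have a: "a < k" by simp
    show "mexp Z $$ (i,a) * R $$ (a,j) = (\<Sum>t. (Z ^\<^sub>m t) $$ (i,a) / of_nat (fact t) * R $$ (a,j))"
      using suminf_mult2[OF pow_entry_summable[OF Z i a], of "R $$ (a,j)"] Z i a by (simp add: mexp_index)
  qed
  also have "\<dots> = (\<Sum>t. \<Sum>a<k. (Z ^\<^sub>m t) $$ (i,a) / of_nat (fact t) * R $$ (a,j))"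
    using Z i by (intro suminf_sum[symmetric] summable_mult2 pow_entry_summable) auto
  also have "\<dots> = (\<Sum>t. (Z ^\<^sub>m t * R) $$ (i,j) / of_nat (fact t))"
    using Z R i j by (intro suminf_cong) (subst mult_entry[of _ k k _ l], auto simp: sum_divide_distrib field_simps)
  finally show ?thesis .
qed

lemma mexp_mult_left:
  fixes Z :: "complex mat"
  assumes Z: "Z \<in> carrier_mat k k" and R: "R \<in> carrier_mat l k" and i: "i < l" and j: "j < k"
  shows "(R * mexp Z) $$ (i,j) = (\<Sum>t. (R * Z ^\<^sub>m t) $$ (i,j) / of_nat (fact t))"
proof -
  have "(R * mexp Z) $$ (i,j) = (\<Sum>a<k. R $$ (i,a) * mexp Z $$ (a,j))"
    using R mexp_carrier[OF Z] i j by (rule mult_entry)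
  also have "\<dots> = (\<Sum>a<k. \<Sum>t. R $$ (i,a) * ((Z ^\<^sub>m t) $$ (a,j) / of_nat (fact t)))"
  proof (intro sum.cong refl)
    fix a assume "a \<in> {..<k}" then have a: "a < k" by simp
    show "R $$ (i,a) * mexp Z $$ (a,j) = (\<Sum>t. R $$ (i,a) * ((Z ^\<^sub>m t) $$ (a,j) / of_nat (fact t)))"
      using suminf_mult[OF pow_entry_summable[OF Z a j], of "R $$ (i,a)"] Z j a by (simp add: mexp_index)
  qed
  also have "\<dots> = (\<Sum>t. \<Sum>a<k. R $$ (i,a) * ((Z ^\<^sub>m t) $$ (a,j) / of_nat (fact t)))"
    using Z j by (intro suminf_sum[symmetric] summable_mult pow_entry_summable) auto
  also have "\<dots> = (\<Sum>t. (R * Z ^\<^sub>m t) $$ (i,j) / of_nat (fact t))"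
    using Z R i j by (intro suminf_cong) (subst mult_entry[of _ l k _ k], auto simp: sum_divide_distrib field_simps)
  finally show ?thesis .
qed

lemma pow_intertwine:
  fixes X :: "'a::comm_ring_1 mat"
  assumes X: "X \<in> carrier_mat k k" and Y: "Y \<in> carrier_mat l l" and Q: "Q \<in> carrier_mat k l"
    and XQ: "X * Q = Q * Y"
  shows "X ^\<^sub>m t * Q = Q * Y ^\<^sub>m t"
proof (induction t)
  case 0 then show ?case using X Y Q by simp
next
  case (Suc t)
  have "X ^\<^sub>m Suc t * Q = X ^\<^sub>m t * (X * Q)" using X Q by (simp add: assoc_mult_mat[of _ k k _ k _ l])
  also have "\<dots> = (X ^\<^sub>m t * Q) * Y" using X Q Y XQ by (simp add: assoc_mult_mat[of _ k k _ l _ l])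
  also have "\<dots> = Q * (Y ^\<^sub>m t * Y)" using Suc X Q Y by (simp add: assoc_mult_mat[of _ k l _ l _ l])
  finally show ?case by simp
qed

lemma mexp_intertwine:
  fixes X :: "complex mat"
  assumes X: "X \<in> carrier_mat k k" and Y: "Y \<in> carrier_mat l l" and Q: "Q \<in> carrier_mat k l"
    and XQ: "X * Q = Q * Y"
  shows "mexp X * Q = Q * mexp Y"
proof (rule eq_matI)
  fix i j assume "i < dim_row (Q * mexp Y)" "j < dim_col (Q * mexp Y)"
  then have i: "i < k" and j: "j < l" using Q Y mexp_carrier[OF Y] by auto
  show "(mexp X * Q) $$ (i,j) = (Q * mexp Y) $$ (i,j)"
    using mexp_mult_right[OF X Q i j] mexp_mult_left[OF Y Q i j] pow_intertwine[OF X Y Q XQ] by simp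
qed (use X Q Y mexp_carrier[OF X] mexp_carrier[OF Y] in auto)

lemma transpose_pow:
  fixes X :: "'a::comm_ring_1 mat"
  assumes X: "X \<in> carrier_mat k k"
  shows "transpose_mat X ^\<^sub>m t = transpose_mat (X ^\<^sub>m t)"
proof (induction t)
  case 0 then show ?case using X by simp
next
  case (Suc t)
  have XT: "transpose_mat X \<in> carrier_mat k k" using X by simp
  have c: "X * X ^\<^sub>m t = X ^\<^sub>m t * X" using pow_intertwine[OF X X X refl] by simp
  have "transpose_mat X ^\<^sub>m Suc t = transpose_mat (X ^\<^sub>m t) * transpose_mat X" using Suc by simp
  also have "\<dots> = transpose_mat (X * X ^\<^sub>m t)" using X by (simp add: transpose_mult[of _ k k _ k])
  also have "\<dots> = transpose_mat (X ^\<^sub>m Suc t)" using c by simp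
  finally show ?case .
qed

lemma mexp_transpose:
  assumes X: "X \<in> carrier_mat k k"
  shows "transpose_mat (mexp X) = mexp (transpose_mat X)"
  by (rule eq_matI) (use X in \<open>auto simp: mexp_def transpose_pow[OF X]\<close>)
declare assoc_mult_mat[simp del]
declare minus_carrier_mat[simp]
lemma kron_dims[simp]: "dim_row (kron X Y) = dim_row X * dim_row Y" "dim_col (kron X Y) = dim_col X * dim_col Y"
  by (auto simp: kron_def)
lemma vecm_dims[simp]: "dim_row (vecm X) = dim_row X * dim_col X" "dim_col (vecm X) = 1"
  by (auto simp: vecm_def)
lemma mexp_dims[simp]: "dim_row (mexp X) = dim_row X" "dim_col (mexp X) = dim_row X"
  by (auto simp: mexp_def)

lemma transpose_smult: "transpose_mat (k \<cdot>\<^sub>m X) = k \<cdot>\<^sub>m transpose_mat X"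
  by (rule eq_matI) auto

lemma Ec_carrier: "X \<in> carrier_mat k k \<Longrightarrow> mexp (c \<cdot>\<^sub>m X) \<in> carrier_mat k k"
  by (rule mexp_carrier) simp

lemma Ec_intertwine:
  assumes X: "X \<in> carrier_mat k k" and Y: "Y \<in> carrier_mat l l" and Q: "Q \<in> carrier_mat k l"
    and XQ: "X * Q = Q * Y"
  shows "mexp (c \<cdot>\<^sub>m X) * Q = Q * mexp (c \<cdot>\<^sub>m Y)"
proof (rule mexp_intertwine)
  show "c \<cdot>\<^sub>m X * Q = Q * (c \<cdot>\<^sub>m Y)"
    using X Y Q XQ by (simp add: mult_smult_assoc_mat[OF X Q] mult_smult_distrib[OF Q Y])
qed (use X Y Q in auto)

lemma Ec_transpose: "X \<in> carrier_mat k k \<Longrightarrow> transpose_mat (mexp (c \<cdot>\<^sub>m X)) = mexp (c \<cdot>\<^sub>m transpose_mat X)"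
  by (subst mexp_transpose[of _ k]) (auto simp: transpose_smult)

lemma kron_vec_I:
  fixes X :: "'a::comm_ring_1 mat"
  assumes X: "X \<in> carrier_mat a b" and Y: "Y \<in> carrier_mat c b"
  shows "kron X Y * vecm (1\<^sub>m b) = vecm (Y * transpose_mat X)"
  using kron_vec[OF X Y, of "1\<^sub>m b"] Y by simp

lemma sylv_vec:
  fixes F :: "'a::comm_ring_1 mat"
  assumes F: "F \<in> carrier_mat a a" and G: "G \<in> carrier_mat b b" and X: "X \<in> carrier_mat a b"
  shows "(kron (1\<^sub>m b) F + kron G (1\<^sub>m a)) * vecm X = vecm (F * X + X * transpose_mat G)"
proof -
  have k1: "kron (1\<^sub>m b) F \<in> carrier_mat (b*a) (b*a)" using F by (intro kron_carrier) auto
  have k2: "kron G (1\<^sub>m a) \<in> carrier_mat (b*a) (b*a)" using G by (intro kron_carrier) auto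
  have v: "vecm X \<in> carrier_mat (b*a) 1" using vecm_carrier[OF X] by (simp add: mult.commute)
  have "(kron (1\<^sub>m b) F + kron G (1\<^sub>m a)) * vecm X = kron (1\<^sub>m b) F * vecm X + kron G (1\<^sub>m a) * vecm X"
    using k1 k2 v by (rule add_mult_distrib_mat)
  also have "\<dots> = vecm (F * X * transpose_mat (1\<^sub>m b)) + vecm (1\<^sub>m a * X * transpose_mat G)"
    using F G X by (simp add: kron_vec[of "1\<^sub>m b" b b F a a X] kron_vec[of G b b "1\<^sub>m a" a a X])
  also have "\<dots> = vecm (F * X) + vecm (X * transpose_mat G)" using F G X by simp
  also have "\<dots> = vecm (F * X + X * transpose_mat G)" using F G X by (intro vecm_plus[symmetric]) auto
  finally show ?thesis .
qed

lemma minv_solve: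
  fixes K :: "'a::field mat"
  assumes K: "K \<in> carrier_mat N N" and inv: "invertible_mat K" and x: "x \<in> carrier_mat N k"
  shows "minv K * (K * x) = x"
proof -
  have "minv K * (K * x) = (minv K * K) * x"
    using minv_props[OF K inv] K x by (subst assoc_mult_mat[of "minv K" N N K N x k]) auto
  then show ?thesis using minv_props[OF K inv] x by simp
qed
declare carrier_matD[simp del]
lemma carrier_iff[simp]: "(X \<in> carrier_mat a b) = (dim_row X = a \<and> dim_col X = b)"
  by (simp add: carrier_mat_def)

lemma part_a:
  fixes A B C V D Bt P Pr Ah Bh Ch :: "complex mat" and c :: complex and E
  assumes E: "E = (\<lambda>X. mexp (c \<cdot>\<^sub>m X))"
    and A: "A \<in> carrier_mat n n" and B: "B \<in> carrier_mat n m" and C: "C \<in> carrier_mat p n"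
    and V: "V \<in> carrier_mat n r" and D: "D \<in> carrier_mat r r" and Bt: "Bt \<in> carrier_mat r m"
    and P: "P \<in> carrier_mat r n"
    and DT: "transpose_mat D = D" and PV: "P * V = 1\<^sub>m r" and Pr: "Pr = V * P"
    and Ah: "Ah = P * A * V" and Bh: "Bh = P * B" and Ch: "Ch = C * V"
    and sylV: "- (V * D) - A * V = B * transpose_mat Bt - E A * B * transpose_mat Bt * E D"
    and inv1: "invertible_mat (kron (1\<^sub>m r) Ah + kron D (1\<^sub>m r))"
    and inv2: "invertible_mat (kron (1\<^sub>m r) A + kron D (1\<^sub>m n))"
  shows "kron (1\<^sub>m r) Ch * minv (kron (1\<^sub>m r) Ah + kron D (1\<^sub>m r))
        * (kron (E D * Bt) (E Ah * Bh) - kron Bt Bh) * vecm (1\<^sub>m m)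
    - kron (1\<^sub>m r) C * minv (kron (1\<^sub>m r) A + kron D (1\<^sub>m n))
        * (kron (E D * Bt) (E A * B) - kron Bt B) * vecm (1\<^sub>m m)
    = kron (1\<^sub>m r) Ch * minv (kron (1\<^sub>m r) Ah + kron D (1\<^sub>m r))
        * kron (E D * Bt) (P * (E (A * Pr) - E A) * B) * vecm (1\<^sub>m m)"
proof -
  define Kh where "Kh = kron (1\<^sub>m r) Ah + kron D (1\<^sub>m r)"
  define Ka where "Ka = kron (1\<^sub>m r) A + kron D (1\<^sub>m n)"
  define Xa where "Xa = E D * Bt"
  define Q where "Q = P * (E (A * Pr) - E A) * B"
  define vI where "vI = vecm (1\<^sub>m m :: complex mat)"
  define G where "G = E A * B * transpose_mat Bt * E D"
  have Ecar: "\<And>X k. X \<in> carrier_mat k k \<Longrightarrow> E X \<in> carrier_mat k k" unfolding E by (rule Ec_carrier)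
  have Ahc: "Ah \<in> carrier_mat r r" using Ah P A V by (simp add: carrier_mat_def del: carrier_matD)
  have Bhc: "Bh \<in> carrier_mat r m" using Bh P B by (simp add: carrier_mat_def del: carrier_matD)
  have Chc: "Ch \<in> carrier_mat p r" using Ch C V by (simp add: carrier_mat_def del: carrier_matD)
  have Prc: "Pr \<in> carrier_mat n n" using Pr P V by (simp add: carrier_mat_def del: carrier_matD)
  have EDc: "E D \<in> carrier_mat r r" using Ecar[OF D] .
  have EAc: "E A \<in> carrier_mat n n" using Ecar[OF A] .
  have EAhc: "E Ah \<in> carrier_mat r r" using Ecar[OF Ahc] .
  have EAPc: "E (A * Pr) \<in> carrier_mat n n" using Ecar Prc A by (simp add: carrier_mat_def del: carrier_matD)
  have Xac: "Xa \<in> carrier_mat r m" unfolding Xa_def using EDc Bt by (simp add: carrier_mat_def del: carrier_matD)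
  have Qc: "Q \<in> carrier_mat r m" unfolding Q_def by (rule mult_carrier_mat[OF mult_carrier_mat[OF P minus_carrier_mat[OF EAc]] B])
  have Gc: "G \<in> carrier_mat n r" unfolding G_def using EAc B Bt EDc by (simp add: carrier_mat_def del: carrier_matD)
  have Khc: "Kh \<in> carrier_mat (r*r) (r*r)" unfolding Kh_def using Ahc D
    by (intro add_carrier_mat kron_carrier[of _ r r _ r r, simplified]) auto
  have Kac: "Ka \<in> carrier_mat (r*n) (r*n)" unfolding Ka_def using A D
    by (intro add_carrier_mat) (auto intro: kron_carrier[of _ r r _ n n, simplified] kron_carrier[of _ r r _ n n])
  have EDT: "transpose_mat (E D) = E D" unfolding E using Ec_transpose[OF D] DT by simp
  have XaT: "transpose_mat Xa = transpose_mat Bt * E D"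
    unfolding Xa_def using transpose_mult[OF EDc Bt] EDT by simp
  have AhP: "Ah * P = P * (A * Pr)"
    unfolding Ah Pr using P A V by (simp add: assoc_mult_mat[of _ r n _ n _ r] assoc_mult_mat[of _ r n _ r _ n] assoc_mult_mat[of A n n V r P n])
  have EAhP: "E Ah * P = P * E (A * Pr)"
    unfolding E by (rule Ec_intertwine[OF Ahc _ P AhP]) (use A Prc in simp)
  have Ya: "E Ah * Bh = P * E (A * Pr) * B"
    unfolding Bh using EAhP EAhc P B by (simp add: assoc_mult_mat[of _ r r _ n _ m, symmetric])
  have sylV': "A * V + V * D = G - B * transpose_mat Bt"
    unfolding G_def
  proof (rule eq_matI)
    fix i j assume ij: "i < dim_row (E A * B * transpose_mat Bt * E D - B * transpose_mat Bt)"
      "j < dim_col (E A * B * transpose_mat Bt * E D - B * transpose_mat Bt)"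
    then have i: "i < n" and j: "j < r" using EAc B Bt EDc by auto
    have "(- (V * D) - A * V) $$ (i,j) = (B * transpose_mat Bt - E A * B * transpose_mat Bt * E D) $$ (i,j)"
      using sylV by simp
    then show "(A * V + V * D) $$ (i,j) = (E A * B * transpose_mat Bt * E D - B * transpose_mat Bt) $$ (i,j)"
      using i j A V D B Bt EAc EDc by simp (simp add: algebra_simps)
  qed (use A V D B Bt EAc EDc in auto)
  have PG: "Ah + D = P * G - P * (B * transpose_mat Bt)"
  proof -
    have "P * (A * V + V * D) = P * (G - B * transpose_mat Bt)" using sylV' by simp
    also have "\<dots> = P * G - P * (B * transpose_mat Bt)" using P Gc B Bt by (intro mult_minus_distrib_mat) auto
    finally have "P * (A * V + V * D) = P * G - P * (B * transpose_mat Bt)" .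
    moreover have "P * (A * V + V * D) = Ah + D"
    proof -
      have "P * (A * V + V * D) = P * (A * V) + P * (V * D)" using P A V D by (intro mult_add_distrib_mat) auto
      also have "P * (A * V) = Ah" unfolding Ah using P A V by (simp add: assoc_mult_mat[of _ r n _ n _ r])
      also have "P * (V * D) = D" using P V D PV by (simp add: assoc_mult_mat[of _ r n _ r _ r, symmetric])
      finally show ?thesis .
    qed
    ultimately show ?thesis by simp
  qed
  have uL: "(kron Xa (E Ah * Bh) - kron Bt Bh) * vI = vecm (E Ah * Bh * transpose_mat Xa - Bh * transpose_mat Bt)"
  proof -
    have "(kron Xa (E Ah * Bh) - kron Bt Bh) * vI = kron Xa (E Ah * Bh) * vI - kron Bt Bh * vI"
      unfolding vI_def using Xac EAhc Bhc Bt
      by (intro minus_mult_distrib_mat[of _ "r*r" "m*m" _ _ 1]) (auto intro: kron_carrier[of _ r m _ r m, simplified] vecm_carrier[of _ m m, simplified])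
    also have "\<dots> = vecm (E Ah * Bh * transpose_mat Xa) - vecm (Bh * transpose_mat Bt)"
      unfolding vI_def using Xac EAhc Bhc Bt by (simp add: kron_vec_I[of _ r m _ r])
    also have "\<dots> = vecm (E Ah * Bh * transpose_mat Xa - Bh * transpose_mat Bt)"
      using Xac EAhc Bhc Bt by (intro vecm_minus[symmetric, of _ r r]) auto
    finally show ?thesis .
  qed
  have uE: "kron Xa Q * vI = vecm (Q * transpose_mat Xa)"
    unfolding vI_def using Xac Qc by (rule kron_vec_I)
  have uR: "(kron Xa (E A * B) - kron Bt B) * vI = vecm (E A * B * transpose_mat Xa - B * transpose_mat Bt)"
  proof -
    have "(kron Xa (E A * B) - kron Bt B) * vI = kron Xa (E A * B) * vI - kron Bt B * vI"
      unfolding vI_def using Xac EAc B Bt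
      by (intro minus_mult_distrib_mat[of _ "r*n" "m*m" _ _ 1]) (auto intro: kron_carrier[of _ r m _ n m, simplified] vecm_carrier[of _ m m, simplified])
    also have "\<dots> = vecm (E A * B * transpose_mat Xa) - vecm (B * transpose_mat Bt)"
      unfolding vI_def using Xac EAc B Bt by (simp add: kron_vec_I[of _ r m _ n])
    also have "\<dots> = vecm (E A * B * transpose_mat Xa - B * transpose_mat Bt)"
      using Xac EAc B Bt by (intro vecm_minus[symmetric, of _ n r]) auto
    finally show ?thesis .
  qed
  have XaG: "E A * B * transpose_mat Xa = G"
    unfolding XaT G_def using EAc B Bt EDc
    by (simp add: assoc_mult_mat[of "E A * B" n m _ r _ r])
  have R_eq: "E A * B * transpose_mat Xa - B * transpose_mat Bt = A * V + V * D"
    using sylV' XaG by simp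
  have L_eq: "E Ah * Bh * transpose_mat Xa - Bh * transpose_mat Bt = (Ah + D) + Q * transpose_mat Xa"
  proof -
    define M1 where "M1 = P * E (A * Pr) * B * transpose_mat Xa"
    have M1c: "M1 \<in> carrier_mat r r" unfolding M1_def using P EAPc B Xac by (simp add: carrier_mat_def del: carrier_matD)
    have PGc: "P * G \<in> carrier_mat r r" using P Gc by (simp add: carrier_mat_def del: carrier_matD)
    have PBc: "P * (B * transpose_mat Bt) \<in> carrier_mat r r" using P B Bt by (simp add: carrier_mat_def del: carrier_matD)
    have e1: "E Ah * Bh * transpose_mat Xa = M1" unfolding M1_def Ya ..
    have e2: "Bh * transpose_mat Bt = P * (B * transpose_mat Bt)" unfolding Bh using P B Bt by (intro assoc_mult_mat[of _ r n _ m _ r]) auto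
    have e3: "Q * transpose_mat Xa = M1 - P * G"
    proof -
      have "Q = P * E (A * Pr) * B - P * E A * B" unfolding Q_def
        using P EAPc EAc B by (simp add: mult_minus_distrib_mat[of _ r n] minus_mult_distrib_mat[of _ r n])
      then have "Q * transpose_mat Xa = P * E (A * Pr) * B * transpose_mat Xa - P * E A * B * transpose_mat Xa"
        using P EAPc EAc B Xac by (simp add: minus_mult_distrib_mat[of _ r m])
      also have "P * E A * B * transpose_mat Xa = P * G" unfolding XaG[symmetric]
        using P EAc B Xac by (simp add: assoc_mult_mat[of P r n _ n _ m] assoc_mult_mat[of P r n _ m _ r])
      finally show ?thesis unfolding M1_def .
    qed
    show ?thesis unfolding e1 e2 e3 PG
      by (rule eq_matI) (use M1c PGc PBc in auto)
  qed
  have KhI: "Kh * vecm (1\<^sub>m r) = vecm (Ah + D)"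
    unfolding Kh_def using sylv_vec[OF Ahc D, of "1\<^sub>m r"] DT Ahc D by simp
  have KaV: "Ka * vecm V = vecm (A * V + V * D)"
    unfolding Ka_def using sylv_vec[OF A D V] DT by simp
  have vIc: "vecm (1\<^sub>m r :: complex mat) \<in> carrier_mat (r*r) 1" using vecm_carrier[of "1\<^sub>m r" r r] by simp
  have vEc: "vecm (Q * transpose_mat Xa) \<in> carrier_mat (r*r) 1" using vecm_carrier[of _ r r] Qc Xac by simp
  have vVc: "vecm V \<in> carrier_mat (r*n) 1" using vecm_carrier[OF V] by (simp add: mult.commute)
  have mKhc: "minv Kh \<in> carrier_mat (r*r) (r*r)" using minv_props(1)[OF Khc] inv1 unfolding Kh_def by auto
  have key: "minv Kh * ((kron Xa (E Ah * Bh) - kron Bt Bh) * vI) = vecm (1\<^sub>m r) + minv Kh * (kron Xa Q * vI)"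
  proof -
    have "(kron Xa (E Ah * Bh) - kron Bt Bh) * vI = Kh * vecm (1\<^sub>m r) + vecm (Q * transpose_mat Xa)"
      unfolding uL L_eq KhI using Ahc D Qc Xac by (intro vecm_plus[of _ r r]) auto
    then have "minv Kh * ((kron Xa (E Ah * Bh) - kron Bt Bh) * vI) = minv Kh * (Kh * vecm (1\<^sub>m r)) + minv Kh * vecm (Q * transpose_mat Xa)"
      using mKhc Khc vIc vEc by (simp add: mult_add_distrib_mat[of _ "r*r" "r*r" _ 1])
    also have "minv Kh * (Kh * vecm (1\<^sub>m r)) = vecm (1\<^sub>m r)"
      using minv_solve[OF Khc _ vIc] inv1 unfolding Kh_def by simp
    finally show ?thesis unfolding uE .
  qed
  have mKac: "minv Ka \<in> carrier_mat (r*n) (r*n)" using minv_props(1)[OF Kac] inv2 unfolding Ka_def by auto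
  have keyR: "minv Ka * ((kron Xa (E A * B) - kron Bt B) * vI) = vecm V"
    unfolding uR R_eq KaV[symmetric] using minv_solve[OF Kac _ vVc] inv2 unfolding Ka_def by simp
  have vIm: "vI \<in> carrier_mat (m*m) 1" unfolding vI_def by simp
  have U1: "kron Xa (E Ah * Bh) - kron Bt Bh \<in> carrier_mat (r*r) (m*m)" using Xac EAhc Bhc Bt by simp
  have U2: "kron Xa (E A * B) - kron Bt B \<in> carrier_mat (r*n) (m*m)" using Xac EAc B Bt by simp
  have U3: "kron Xa Q \<in> carrier_mat (r*r) (m*m)" using Xac Qc by simp
  have kc1: "kron (1\<^sub>m r) Ch \<in> carrier_mat (r*p) (r*r)" using Chc by simp
  have kc2: "kron (1\<^sub>m r) C \<in> carrier_mat (r*p) (r*n)" using C by simp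
  define Z where "Z = kron (1\<^sub>m r) Ch * (minv Kh * (kron Xa Q * vI))"
  have Zc: "Z \<in> carrier_mat (r*p) 1" unfolding Z_def using kc1 mKhc U3 vIm by simp
  have vCh: "vecm Ch \<in> carrier_mat (r*p) 1" using Chc by (simp add: mult.commute)
  have L1: "kron (1\<^sub>m r) Ch * minv Kh * (kron Xa (E Ah * Bh) - kron Bt Bh) * vI = vecm Ch + Z"
  proof -
    have "kron (1\<^sub>m r) Ch * minv Kh * (kron Xa (E Ah * Bh) - kron Bt Bh) * vI
       = kron (1\<^sub>m r) Ch * (minv Kh * ((kron Xa (E Ah * Bh) - kron Bt Bh) * vI))"
      by (simp only: assoc_mult_mat[OF mult_carrier_mat[OF kc1 mKhc] U1 vIm] assoc_mult_mat[OF kc1 mKhc mult_carrier_mat[OF U1 vIm]])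
    also have "\<dots> = kron (1\<^sub>m r) Ch * (vecm (1\<^sub>m r) + minv Kh * (kron Xa Q * vI))"
      using key by simp
    also have "\<dots> = kron (1\<^sub>m r) Ch * vecm (1\<^sub>m r) + Z"
      unfolding Z_def using kc1 vIc mKhc U3 vIm by (intro mult_add_distrib_mat[of _ "r*p" "r*r" _ 1]) auto
    also have "kron (1\<^sub>m r) Ch * vecm (1\<^sub>m r) = vecm Ch"
      using kron_vec[of "1\<^sub>m r" r r Ch p r "1\<^sub>m r"] Chc by simp
    finally show ?thesis .
  qed
  have R1: "kron (1\<^sub>m r) C * minv Ka * (kron Xa (E A * B) - kron Bt B) * vI = vecm Ch"
  proof -
    have "kron (1\<^sub>m r) C * minv Ka * (kron Xa (E A * B) - kron Bt B) * vI
       = kron (1\<^sub>m r) C * (minv Ka * ((kron Xa (E A * B) - kron Bt B) * vI))"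
      by (simp only: assoc_mult_mat[OF mult_carrier_mat[OF kc2 mKac] U2 vIm] assoc_mult_mat[OF kc2 mKac mult_carrier_mat[OF U2 vIm]])
    also have "\<dots> = kron (1\<^sub>m r) C * vecm V" using keyR by simp
    also have "\<dots> = vecm Ch" unfolding Ch using kron_vec[of "1\<^sub>m r" r r C p n V] C V by simp
    finally show ?thesis .
  qed
  have E1: "kron (1\<^sub>m r) Ch * minv Kh * kron Xa Q * vI = Z"
    unfolding Z_def by (simp only: assoc_mult_mat[OF mult_carrier_mat[OF kc1 mKhc] U3 vIm] assoc_mult_mat[OF kc1 mKhc mult_carrier_mat[OF U3 vIm]])
  have "vecm Ch + Z - vecm Ch = Z" by (rule eq_matI) (use vCh Zc in auto)
  then show ?thesis
    unfolding Kh_def[symmetric] Ka_def[symmetric] Xa_def[symmetric] vI_def[symmetric] Q_def[symmetric] L1 R1 E1 .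
qed

lemma transpose3:
  fixes X1 :: "'a::comm_ring_1 mat"
  assumes "X1 \<in> carrier_mat a b" "X2 \<in> carrier_mat b c" "X3 \<in> carrier_mat c d"
  shows "transpose_mat (X1 * X2 * X3) = transpose_mat X3 * transpose_mat X2 * transpose_mat X1"
  using assms by (simp add: transpose_mult[of _ a c _ d] transpose_mult[of _ a b _ c] assoc_mult_mat[of _ d c _ b _ a])

lemma transpose4:
  fixes X1 :: "'a::comm_ring_1 mat"
  assumes c: "X1 \<in> carrier_mat a b" "X2 \<in> carrier_mat b c" "X3 \<in> carrier_mat c d" "X4 \<in> carrier_mat d e"
  shows "transpose_mat (X1 * X2 * X3 * X4) = transpose_mat X4 * transpose_mat X3 * transpose_mat X2 * transpose_mat X1"
proof -
  have "transpose_mat (X1 * X2 * X3 * X4) = transpose_mat X4 * transpose_mat (X1 * X2 * X3)"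
    using c by (intro transpose_mult[of _ a d _ e]) auto
  also have "\<dots> = transpose_mat X4 * (transpose_mat X3 * transpose_mat X2 * transpose_mat X1)"
    using transpose3[OF c(1-3)] by simp
  also have "\<dots> = transpose_mat X4 * transpose_mat X3 * transpose_mat X2 * transpose_mat X1"
    using c by (simp add: assoc_mult_mat[of _ e d _ c _ b] assoc_mult_mat[of _ e d _ b _ a] assoc_mult_mat[of _ e c _ b _ a])
  finally show ?thesis .
qed

lemma part_b:
  fixes A B C V W D P Pr Ah Bh Ch Ct :: "complex mat" and c :: complex and E
  assumes E: "E = (\<lambda>X. mexp (c \<cdot>\<^sub>m X))"
    and A: "A \<in> carrier_mat n n" and B: "B \<in> carrier_mat n m" and C: "C \<in> carrier_mat p n"
    and V: "V \<in> carrier_mat n r" and W: "W \<in> carrier_mat n r" and D: "D \<in> carrier_mat r r"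
    and Ct: "Ct \<in> carrier_mat p r" and P: "P \<in> carrier_mat r n"
    and DT: "transpose_mat D = D" and PV: "P * V = 1\<^sub>m r" and WVP: "transpose_mat W * V * P = transpose_mat W"
    and Pr: "Pr = V * P"
    and Ah: "Ah = P * A * V" and Bh: "Bh = P * B" and Ch: "Ch = C * V"
    and sylW: "- (W * D) - transpose_mat A * W
               = transpose_mat C * Ct - E (transpose_mat A) * transpose_mat C * Ct * E D"
    and inv3: "invertible_mat (kron (1\<^sub>m r) D + kron (transpose_mat Ah) (1\<^sub>m r))"
    and inv4: "invertible_mat (kron (1\<^sub>m n) D + kron (transpose_mat A) (1\<^sub>m r))"
  shows "kron (transpose_mat Bh) (1\<^sub>m r) * minv (kron (1\<^sub>m r) D + kron (transpose_mat Ah) (1\<^sub>m r))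
        * (kron (E (transpose_mat Ah) * transpose_mat Ch) (E D * transpose_mat Ct)
           - kron (transpose_mat Ch) (transpose_mat Ct)) * vecm (1\<^sub>m p)
    - kron (transpose_mat B) (1\<^sub>m r) * minv (kron (1\<^sub>m n) D + kron (transpose_mat A) (1\<^sub>m r))
        * (kron (E (transpose_mat A) * transpose_mat C) (E D * transpose_mat Ct)
           - kron (transpose_mat C) (transpose_mat Ct)) * vecm (1\<^sub>m p)
    = kron (transpose_mat Bh) (1\<^sub>m r) * minv (kron (1\<^sub>m r) D + kron (transpose_mat Ah) (1\<^sub>m r))
        * kron (transpose_mat V * (E (transpose_mat A * transpose_mat Pr) - E (transpose_mat A))
                  * transpose_mat C) (E D * transpose_mat Ct) * vecm (1\<^sub>m p)"
proof -
  define Kb where "Kb = kron (1\<^sub>m r) D + kron (transpose_mat Ah) (1\<^sub>m r)"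
  define Kc where "Kc = kron (1\<^sub>m n) D + kron (transpose_mat A) (1\<^sub>m r)"
  define Y where "Y = E D * transpose_mat Ct"
  define Q where "Q = transpose_mat V * (E (transpose_mat A * transpose_mat Pr) - E (transpose_mat A)) * transpose_mat C"
  define vI where "vI = vecm (1\<^sub>m p :: complex mat)"
  define WV where "WV = transpose_mat W * V"
  have Ecar: "\<And>X k. X \<in> carrier_mat k k \<Longrightarrow> E X \<in> carrier_mat k k" unfolding E by (rule Ec_carrier)
  have Etr: "\<And>X k. X \<in> carrier_mat k k \<Longrightarrow> transpose_mat (E X) = E (transpose_mat X)" unfolding E by (rule Ec_transpose)
  have Ahc: "Ah \<in> carrier_mat r r" using Ah P A V by simp
  have Bhc: "Bh \<in> carrier_mat r m" using Bh P B by simp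
  have Chc: "Ch \<in> carrier_mat p r" using Ch C V by simp
  have Prc: "Pr \<in> carrier_mat n n" using Pr P V by simp
  have WVc: "WV \<in> carrier_mat r r" unfolding WV_def using W V by simp
  have EDc: "E D \<in> carrier_mat r r" using Ecar[OF D] .
  have EAc: "E A \<in> carrier_mat n n" using Ecar[OF A] .
  have EAhc: "E Ah \<in> carrier_mat r r" using Ecar[OF Ahc] .
  have EPAc: "E (Pr * A) \<in> carrier_mat n n" using Ecar Prc A by simp
  have Yc: "Y \<in> carrier_mat r p" unfolding Y_def using EDc Ct by simp
  have EATc: "E (transpose_mat A) \<in> carrier_mat n n" using Ecar A by simp
  have EATPc: "E (transpose_mat A * transpose_mat Pr) \<in> carrier_mat n n" using Ecar A Prc by simp
  have Qc: "Q \<in> carrier_mat r p" unfolding Q_def using V EATc EATPc C by simp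
  have Kbc: "Kb \<in> carrier_mat (r*r) (r*r)" unfolding Kb_def using D Ahc by simp
  have Kcc: "Kc \<in> carrier_mat (r*n) (r*n)" unfolding Kc_def using D A by (simp add: mult.commute)
  have EDT: "transpose_mat (E D) = E D" using Etr[OF D] DT by simp
  have EAT: "transpose_mat (E (transpose_mat A)) = E A" using Etr[of "transpose_mat A" n] A by simp
  have EAhT: "transpose_mat (E (transpose_mat Ah)) = E Ah" using Etr[of "transpose_mat Ah" r] Ahc by simp
  have EPAT: "transpose_mat (E (transpose_mat A * transpose_mat Pr)) = E (Pr * A)"
    using Etr[of "transpose_mat A * transpose_mat Pr" n] A Prc by (simp add: transpose_mult[of "transpose_mat A" n n "transpose_mat Pr" n])
  have PAV: "(Pr * A) * V = V * Ah"
    unfolding Pr Ah using P A V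
    by (simp add: assoc_mult_mat[of V n r P n A n] assoc_mult_mat[of V n r "P * A" n V r] assoc_mult_mat[of V n r P n "A*V" r]
        assoc_mult_mat[of P r n A n V r])
  have EPAV: "E (Pr * A) * V = V * E Ah"
    unfolding E by (rule Ec_intertwine[OF _ Ahc V PAV]) (use A Prc in simp)
  have sylT: "- (D * transpose_mat W) - transpose_mat W * A = transpose_mat Ct * C - Y * C * E A"
  proof -
    have "transpose_mat (- (W * D) - transpose_mat A * W) = - (D * transpose_mat W) - transpose_mat W * A"
    proof -
      have t1: "transpose_mat (W * D) = D * transpose_mat W" using transpose_mult[of W n r D r] W D DT by simp
      have t2: "transpose_mat (transpose_mat A * W) = transpose_mat W * A" using transpose_mult[of "transpose_mat A" n n W r] W A by simp
      have "transpose_mat (- (W * D) - transpose_mat A * W) = - transpose_mat (W * D) - transpose_mat (transpose_mat A * W)"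
        by (rule eq_matI) (use W D A in auto)
      then show ?thesis unfolding t1 t2 .
    qed
    moreover have "transpose_mat (transpose_mat C * Ct - E (transpose_mat A) * transpose_mat C * Ct * E D)
       = transpose_mat Ct * C - Y * C * E A"
      unfolding Y_def using C Ct EATc EDc
      by (simp add: transpose_minus[of _ n r] transpose_mult[of "transpose_mat C" n p Ct r]
        transpose4[of "E (transpose_mat A)" n n "transpose_mat C" p Ct r "E D" r] EDT EAT)
    ultimately show ?thesis using sylW by metis
  qed
  have sylW': "D * transpose_mat W + transpose_mat W * A = Y * C * E A - transpose_mat Ct * C"
  proof (rule eq_matI)
    fix i j assume "i < dim_row (Y * C * E A - transpose_mat Ct * C)" "j < dim_col (Y * C * E A - transpose_mat Ct * C)"
    then have i: "i < r" and j: "j < n" using Ct C by auto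
    have "(- (D * transpose_mat W) - transpose_mat W * A) $$ (i,j) = (transpose_mat Ct * C - Y * C * E A) $$ (i,j)"
      using sylT by simp
    then show "(D * transpose_mat W + transpose_mat W * A) $$ (i,j) = (Y * C * E A - transpose_mat Ct * C) $$ (i,j)"
      using i j A W D C Ct Yc EAc by simp (simp add: algebra_simps)
  qed (use A W D C Ct Yc EAc in auto)
  have vIm: "vI \<in> carrier_mat (p*p) 1" unfolding vI_def by simp
  have uL: "(kron (E (transpose_mat Ah) * transpose_mat Ch) Y - kron (transpose_mat Ch) (transpose_mat Ct)) * vI
      = vecm (Y * Ch * E Ah - transpose_mat Ct * Ch)"
  proof -
    have k1: "kron (E (transpose_mat Ah) * transpose_mat Ch) Y \<in> carrier_mat (r*r) (p*p)" using Ecar[of "transpose_mat Ah" r] Ahc Chc Yc by simp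
    have k2: "kron (transpose_mat Ch) (transpose_mat Ct) \<in> carrier_mat (r*r) (p*p)" using Chc Ct by simp
    have "(kron (E (transpose_mat Ah) * transpose_mat Ch) Y - kron (transpose_mat Ch) (transpose_mat Ct)) * vI
      = kron (E (transpose_mat Ah) * transpose_mat Ch) Y * vI - kron (transpose_mat Ch) (transpose_mat Ct) * vI"
      using k1 k2 vIm by (rule minus_mult_distrib_mat)
    also have "\<dots> = vecm (Y * transpose_mat (E (transpose_mat Ah) * transpose_mat Ch)) - vecm (transpose_mat Ct * Ch)"
      unfolding vI_def using Ecar[of "transpose_mat Ah" r] Ahc Chc Yc Ct
      by (simp add: kron_vec_I[of _ r p _ r])
    also have "transpose_mat (E (transpose_mat Ah) * transpose_mat Ch) = Ch * E Ah"
      using Ecar[of "transpose_mat Ah" r] Ahc Chc by (simp add: transpose_mult[of _ r r _ p] EAhT)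
    also have "Y * (Ch * E Ah) = Y * Ch * E Ah" using Yc Chc EAhc by (simp add: assoc_mult_mat[of Y r p Ch r])
    also have "vecm (Y * Ch * E Ah) - vecm (transpose_mat Ct * Ch) = vecm (Y * Ch * E Ah - transpose_mat Ct * Ch)"
      using Yc Chc EAhc Ct by (intro vecm_minus[symmetric, of _ r r]) auto
    finally show ?thesis .
  qed
  have uR: "(kron (E (transpose_mat A) * transpose_mat C) Y - kron (transpose_mat C) (transpose_mat Ct)) * vI
      = vecm (Y * C * E A - transpose_mat Ct * C)"
  proof -
    have k1: "kron (E (transpose_mat A) * transpose_mat C) Y \<in> carrier_mat (n*r) (p*p)" using EATc C Yc by simp
    have k2: "kron (transpose_mat C) (transpose_mat Ct) \<in> carrier_mat (n*r) (p*p)" using C Ct by simp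
    have "(kron (E (transpose_mat A) * transpose_mat C) Y - kron (transpose_mat C) (transpose_mat Ct)) * vI
      = kron (E (transpose_mat A) * transpose_mat C) Y * vI - kron (transpose_mat C) (transpose_mat Ct) * vI"
      using k1 k2 vIm by (rule minus_mult_distrib_mat)
    also have "\<dots> = vecm (Y * transpose_mat (E (transpose_mat A) * transpose_mat C)) - vecm (transpose_mat Ct * C)"
      unfolding vI_def using EATc C Yc Ct
      by (simp add: kron_vec_I[of _ n p _ r])
    also have "transpose_mat (E (transpose_mat A) * transpose_mat C) = C * E A"
      using EATc C by (simp add: transpose_mult[of _ n n _ p] EAT)
    also have "Y * (C * E A) = Y * C * E A" using Yc C EAc by (simp add: assoc_mult_mat[of Y r p C n])
    also have "vecm (Y * C * E A) - vecm (transpose_mat Ct * C) = vecm (Y * C * E A - transpose_mat Ct * C)"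
      using Yc C EAc Ct by (intro vecm_minus[symmetric, of _ r n]) auto
    finally show ?thesis .
  qed
  have uE: "kron Q Y * vI = vecm (Y * transpose_mat Q)"
    unfolding vI_def using Qc Yc by (rule kron_vec_I)
  have QT: "transpose_mat Q = C * (E (Pr * A) - E A) * V"
  proof -
    have "transpose_mat Q = C * transpose_mat (E (transpose_mat A * transpose_mat Pr) - E (transpose_mat A)) * V"
      unfolding Q_def using V EATc EATPc C
      by (simp add: transpose3[of "transpose_mat V" r n _ n "transpose_mat C" p])
    also have "transpose_mat (E (transpose_mat A * transpose_mat Pr) - E (transpose_mat A)) = E (Pr * A) - E A"
      using EATc EATPc by (simp add: transpose_minus[of _ n n] EPAT EAT)
    finally show ?thesis .
  qed
  have KcW: "Kc * vecm (transpose_mat W) = vecm (D * transpose_mat W + transpose_mat W * A)"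
    unfolding Kc_def using sylv_vec[OF D, of "transpose_mat A" n "transpose_mat W"] A W by simp
  have KbWV: "Kb * vecm WV = vecm (D * WV + WV * Ah)"
    unfolding Kb_def using sylv_vec[OF D, of "transpose_mat Ah" r WV] Ahc WVc by simp
  have WVAh: "WV * Ah = transpose_mat W * A * V"
  proof -
    have "WV * Ah = (transpose_mat W * V * P) * A * V"
      unfolding WV_def Ah using W V P A
      by (simp add: assoc_mult_mat[of "transpose_mat W * V" r r P n A n] assoc_mult_mat[of "transpose_mat W * V" r r "P * A" n V r]
          assoc_mult_mat[of "transpose_mat W * V * P" r n A n V r])
    then show ?thesis using WVP by simp
  qed
  define N1 where "N1 = Y * C * E (Pr * A) * V"
  define N2 where "N2 = Y * C * E A * V"
  define N3 where "N3 = transpose_mat Ct * C * V"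
  have N1c: "N1 \<in> carrier_mat r r" unfolding N1_def using Yc C EPAc V by simp
  have N2c: "N2 \<in> carrier_mat r r" unfolding N2_def using Yc C EAc V by simp
  have N3c: "N3 \<in> carrier_mat r r" unfolding N3_def using Ct C V by simp
  have f1: "Y * Ch * E Ah = N1"
    unfolding N1_def Ch using Yc C V EAhc EPAc
    by (simp add: assoc_mult_mat EPAV)
  have f2: "transpose_mat Ct * Ch = N3"
    unfolding N3_def Ch using Ct C V by (simp add: assoc_mult_mat[of "transpose_mat Ct" r p C n V r])
  have f3: "Y * transpose_mat Q = N1 - N2"
  proof -
    have "C * (E (Pr * A) - E A) * V = C * E (Pr * A) * V - C * E A * V"
      using C EPAc EAc V by (simp add: mult_minus_distrib_mat[of C p n] minus_mult_distrib_mat[of _ p n _ _ r])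
    then have "Y * transpose_mat Q = Y * (C * E (Pr * A) * V) - Y * (C * E A * V)"
      unfolding QT using Yc C EPAc EAc V by (simp add: mult_minus_distrib_mat[of Y r p])
    also have "\<dots> = N1 - N2" unfolding N1_def N2_def using Yc C EPAc EAc V
      by (simp add: assoc_mult_mat[of Y r p C n] assoc_mult_mat[of Y r p "C * E (Pr * A)" n V r]
          assoc_mult_mat[of Y r p "C * E A" n V r])
    finally show ?thesis .
  qed
  have f4: "D * WV + WV * Ah = N2 - N3"
  proof -
    have "D * WV + WV * Ah = (D * transpose_mat W + transpose_mat W * A) * V"
      unfolding WVAh unfolding WV_def using D W A V
      by (simp add: add_mult_distrib_mat[of _ r n] assoc_mult_mat[of D r r "transpose_mat W" n V r])
    also have "\<dots> = (Y * C * E A - transpose_mat Ct * C) * V" unfolding sylW' ..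
    also have "\<dots> = N2 - N3" unfolding N2_def N3_def using Yc C EAc Ct V
      by (simp add: minus_mult_distrib_mat[of _ r n _ _ r])
    finally show ?thesis .
  qed
  have L_eq: "Y * Ch * E Ah - transpose_mat Ct * Ch = (D * WV + WV * Ah) + Y * transpose_mat Q"
    unfolding f1 f2 f3 f4 by (rule eq_matI) (use N1c N2c N3c in auto)
  have R_eq: "Y * C * E A - transpose_mat Ct * C = D * transpose_mat W + transpose_mat W * A"
    using sylW' by simp
  have vWVc: "vecm WV \<in> carrier_mat (r*r) 1" using WVc by simp
  have vEc: "vecm (Y * transpose_mat Q) \<in> carrier_mat (r*r) 1" using Yc Qc by simp
  have vWc: "vecm (transpose_mat W) \<in> carrier_mat (r*n) 1" using W by simp
  have mKbc: "minv Kb \<in> carrier_mat (r*r) (r*r)" using minv_props(1)[OF Kbc] inv3 unfolding Kb_def by auto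
  have mKcc: "minv Kc \<in> carrier_mat (r*n) (r*n)" using minv_props(1)[OF Kcc] inv4 unfolding Kc_def by auto
  have key: "minv Kb * ((kron (E (transpose_mat Ah) * transpose_mat Ch) Y - kron (transpose_mat Ch) (transpose_mat Ct)) * vI)
     = vecm WV + minv Kb * (kron Q Y * vI)"
  proof -
    have "(kron (E (transpose_mat Ah) * transpose_mat Ch) Y - kron (transpose_mat Ch) (transpose_mat Ct)) * vI
        = Kb * vecm WV + vecm (Y * transpose_mat Q)"
      unfolding uL L_eq KbWV using D WVc Ahc Yc Qc by (intro vecm_plus[of _ r r]) auto
    then have "minv Kb * ((kron (E (transpose_mat Ah) * transpose_mat Ch) Y - kron (transpose_mat Ch) (transpose_mat Ct)) * vI)
       = minv Kb * (Kb * vecm WV) + minv Kb * vecm (Y * transpose_mat Q)"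
      using mKbc Kbc vWVc vEc by (simp add: mult_add_distrib_mat[of _ "r*r" "r*r" _ 1])
    also have "minv Kb * (Kb * vecm WV) = vecm WV"
      using minv_solve[OF Kbc _ vWVc] inv3 unfolding Kb_def by simp
    finally show ?thesis unfolding uE .
  qed
  have keyR: "minv Kc * ((kron (E (transpose_mat A) * transpose_mat C) Y - kron (transpose_mat C) (transpose_mat Ct)) * vI)
      = vecm (transpose_mat W)"
    unfolding uR R_eq KcW[symmetric] using minv_solve[OF Kcc _ vWc] inv4 unfolding Kc_def by simp
  have U1: "kron (E (transpose_mat Ah) * transpose_mat Ch) Y - kron (transpose_mat Ch) (transpose_mat Ct) \<in> carrier_mat (r*r) (p*p)"
    using Ecar[of "transpose_mat Ah" r] Ahc Chc Yc Ct by simp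
  have U2: "kron (E (transpose_mat A) * transpose_mat C) Y - kron (transpose_mat C) (transpose_mat Ct) \<in> carrier_mat (n*r) (p*p)"
    using EATc C Yc Ct by simp
  have U2': "kron (E (transpose_mat A) * transpose_mat C) Y - kron (transpose_mat C) (transpose_mat Ct) \<in> carrier_mat (r*n) (p*p)"
    using U2 by (simp add: mult.commute)
  have U3: "kron Q Y \<in> carrier_mat (r*r) (p*p)" using Qc Yc by simp
  have kc1: "kron (transpose_mat Bh) (1\<^sub>m r) \<in> carrier_mat (m*r) (r*r)" using Bhc by simp
  have kc2: "kron (transpose_mat B) (1\<^sub>m r) \<in> carrier_mat (m*r) (r*n)" using B by (simp add: mult.commute)
  define Z where "Z = kron (transpose_mat Bh) (1\<^sub>m r) * (minv Kb * (kron Q Y * vI))"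
  have Zc: "Z \<in> carrier_mat (m*r) 1" unfolding Z_def using kc1 mKbc U3 vIm by simp
  have vWB: "vecm (transpose_mat W * B) \<in> carrier_mat (m*r) 1" using W B by (simp add: mult.commute)
  have WVBh: "WV * Bh = transpose_mat W * B"
  proof -
    have "WV * Bh = transpose_mat W * V * P * B" unfolding WV_def Bh using W V P B
      by (simp add: assoc_mult_mat[of "transpose_mat W * V" r r P n B m])
    then show ?thesis using WVP by simp
  qed
  have L1: "kron (transpose_mat Bh) (1\<^sub>m r) * minv Kb * (kron (E (transpose_mat Ah) * transpose_mat Ch) Y - kron (transpose_mat Ch) (transpose_mat Ct)) * vI
     = vecm (transpose_mat W * B) + Z"
  proof -
    have "kron (transpose_mat Bh) (1\<^sub>m r) * minv Kb * (kron (E (transpose_mat Ah) * transpose_mat Ch) Y - kron (transpose_mat Ch) (transpose_mat Ct)) * vI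
       = kron (transpose_mat Bh) (1\<^sub>m r) * (minv Kb * ((kron (E (transpose_mat Ah) * transpose_mat Ch) Y - kron (transpose_mat Ch) (transpose_mat Ct)) * vI))"
      by (simp only: assoc_mult_mat[OF mult_carrier_mat[OF kc1 mKbc] U1 vIm] assoc_mult_mat[OF kc1 mKbc mult_carrier_mat[OF U1 vIm]])
    also have "\<dots> = kron (transpose_mat Bh) (1\<^sub>m r) * (vecm WV + minv Kb * (kron Q Y * vI))"
      using key by simp
    also have "\<dots> = kron (transpose_mat Bh) (1\<^sub>m r) * vecm WV + Z"
      unfolding Z_def using kc1 vWVc mKbc U3 vIm by (intro mult_add_distrib_mat[of _ "m*r" "r*r" _ 1]) auto
    also have "kron (transpose_mat Bh) (1\<^sub>m r) * vecm WV = vecm (transpose_mat W * B)"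
      using kron_vec[of "transpose_mat Bh" m r "1\<^sub>m r" r r WV] Bhc WVc WVBh by simp
    finally show ?thesis .
  qed
  have R1: "kron (transpose_mat B) (1\<^sub>m r) * minv Kc * (kron (E (transpose_mat A) * transpose_mat C) Y - kron (transpose_mat C) (transpose_mat Ct)) * vI
     = vecm (transpose_mat W * B)"
  proof -
    have "kron (transpose_mat B) (1\<^sub>m r) * minv Kc * (kron (E (transpose_mat A) * transpose_mat C) Y - kron (transpose_mat C) (transpose_mat Ct)) * vI
       = kron (transpose_mat B) (1\<^sub>m r) * (minv Kc * ((kron (E (transpose_mat A) * transpose_mat C) Y - kron (transpose_mat C) (transpose_mat Ct)) * vI))"
      by (simp only: assoc_mult_mat[OF mult_carrier_mat[OF kc2 mKcc] U2' vIm] assoc_mult_mat[OF kc2 mKcc mult_carrier_mat[OF U2' vIm]])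
    also have "\<dots> = kron (transpose_mat B) (1\<^sub>m r) * vecm (transpose_mat W)" using keyR by simp
    also have "\<dots> = vecm (transpose_mat W * B)"
      using kron_vec[of "transpose_mat B" m n "1\<^sub>m r" r r "transpose_mat W"] B W by simp
    finally show ?thesis .
  qed
  have E1: "kron (transpose_mat Bh) (1\<^sub>m r) * minv Kb * kron Q Y * vI = Z"
    unfolding Z_def by (simp only: assoc_mult_mat[OF mult_carrier_mat[OF kc1 mKbc] U3 vIm] assoc_mult_mat[OF kc1 mKbc mult_carrier_mat[OF U3 vIm]])
  have "vecm (transpose_mat W * B) + Z - vecm (transpose_mat W * B) = Z" by (rule eq_matI) (use vWB Zc in auto)
  then show ?thesis
    unfolding Kb_def[symmetric] Kc_def[symmetric] Y_def[symmetric] vI_def[symmetric] Q_def[symmetric] L1 R1 E1 .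
qed

lemma transpose_diff_prod:
  fixes X :: "'a::comm_ring_1 mat"
  assumes c: "X \<in> carrier_mat a b" "Y \<in> carrier_mat c' b" "U \<in> carrier_mat a e" "Z \<in> carrier_mat c' e"
  shows "transpose_mat (X * transpose_mat Y - U * transpose_mat Z) = Y * transpose_mat X - Z * transpose_mat U"
proof -
  have "transpose_mat (X * transpose_mat Y - U * transpose_mat Z) = transpose_mat (X * transpose_mat Y) - transpose_mat (U * transpose_mat Z)"
    using c by (intro transpose_minus[of _ a c']) auto
  also have "transpose_mat (X * transpose_mat Y) = Y * transpose_mat X" using c transpose_mult[of X a b "transpose_mat Y" c'] by simp
  also have "transpose_mat (U * transpose_mat Z) = Z * transpose_mat U" using c transpose_mult[of U a e "transpose_mat Z" c'] by simp
  finally show ?thesis .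
qed

lemma row_transpose:
  fixes x :: "'a::comm_ring_1 mat"
  assumes "x \<in> carrier_mat N 1" "K \<in> carrier_mat N M"
  shows "transpose_mat x * K = transpose_mat (transpose_mat K * x)"
  using assms by (simp add: transpose_mult[of _ M N _ 1])

lemma part_c:
  fixes A B C V W D Bt Ct P Pr Ah Bh Ch Ei :: "complex mat" and c :: complex and E
  assumes E: "E = (\<lambda>X. mexp (c \<cdot>\<^sub>m X))"
    and A: "A \<in> carrier_mat n n" and B: "B \<in> carrier_mat n m" and C: "C \<in> carrier_mat p n"
    and V: "V \<in> carrier_mat n r" and W: "W \<in> carrier_mat n r" and D: "D \<in> carrier_mat r r"
    and Bt: "Bt \<in> carrier_mat r m" and Ct: "Ct \<in> carrier_mat p r" and P: "P \<in> carrier_mat r n"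
    and Ei: "Ei \<in> carrier_mat r r"
    and DT: "transpose_mat D = D" and PV: "P * V = 1\<^sub>m r" and WVP: "transpose_mat W * V * P = transpose_mat W"
    and Pr: "Pr = V * P"
    and Ah: "Ah = P * A * V" and Bh: "Bh = P * B" and Ch: "Ch = C * V"
    and sylV: "- (V * D) - A * V = B * transpose_mat Bt - E A * B * transpose_mat Bt * E D"
    and sylW: "- (W * D) - transpose_mat A * W
               = transpose_mat C * Ct - E (transpose_mat A) * transpose_mat C * Ct * E D"
    and inv5: "invertible_mat (kron (1\<^sub>m r) D + kron Ah (1\<^sub>m r))"
    and inv6: "invertible_mat (kron (1\<^sub>m n) D + kron A (1\<^sub>m r))"
  shows "transpose_mat (vecm (1\<^sub>m p)) * kron Ch Ct * minv (kron (1\<^sub>m r) D + kron Ah (1\<^sub>m r))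
        * kron (1\<^sub>m r) Ei
        * (minv (kron (1\<^sub>m r) D + kron Ah (1\<^sub>m r)) * (kron (E Ah * Bh) (E D * Bt) - kron Bh Bt)
           - kron (c \<cdot>\<^sub>m (E Ah * Bh)) (E D * Bt)) * vecm (1\<^sub>m m)
   - transpose_mat (vecm (1\<^sub>m p)) * kron C Ct * minv (kron (1\<^sub>m n) D + kron A (1\<^sub>m r))
        * kron (1\<^sub>m n) Ei
        * (minv (kron (1\<^sub>m n) D + kron A (1\<^sub>m r)) * (kron (E A * B) (E D * Bt) - kron B Bt)
           - kron (c \<cdot>\<^sub>m (E A * B)) (E D * Bt)) * vecm (1\<^sub>m m)
   = transpose_mat (vecm (1\<^sub>m p)) * kron Ch Ct * minv (kron (1\<^sub>m r) D + kron Ah (1\<^sub>m r))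
        * kron (1\<^sub>m r) Ei
        * (minv (kron (1\<^sub>m r) D + kron Ah (1\<^sub>m r)) * kron (P * (E (A * Pr) - E A) * B) (E D * Bt)
           - kron (c \<cdot>\<^sub>m (P * (E (A * Pr) - E A) * B))
                  (E D * Bt)) * vecm (1\<^sub>m m)
   + transpose_mat (vecm (1\<^sub>m p)) * kron (C * E A) (Ct * E D)
        * (kron V (1\<^sub>m r) * minv (kron (1\<^sub>m r) D + kron Ah (1\<^sub>m r)) * kron P (1\<^sub>m r) - minv (kron (1\<^sub>m n) D + kron A (1\<^sub>m r)))
        * kron (1\<^sub>m n) Ei
        * (minv (kron (1\<^sub>m n) D + kron A (1\<^sub>m r)) * (kron (E A * B) (E D * Bt) - kron B Bt)
           - kron (c \<cdot>\<^sub>m (E A * B)) (E D * Bt)) * vecm (1\<^sub>m m)"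
proof -
  have Ecar: "\<And>X k. X \<in> carrier_mat k k \<Longrightarrow> E X \<in> carrier_mat k k" unfolding E by (rule Ec_carrier)
  have Etr: "\<And>X k. X \<in> carrier_mat k k \<Longrightarrow> transpose_mat (E X) = E (transpose_mat X)" unfolding E by (rule Ec_transpose)
  have Ahc: "Ah \<in> carrier_mat r r" using Ah P A V by simp
  have Bhc: "Bh \<in> carrier_mat r m" using Bh P B by simp
  have Chc: "Ch \<in> carrier_mat p r" using Ch C V by simp
  have Prc: "Pr \<in> carrier_mat n n" using Pr P V by simp
  have EDc: "E D \<in> carrier_mat r r" using Ecar[OF D] .
  have EAc: "E A \<in> carrier_mat n n" using Ecar[OF A] .
  have EAhc: "E Ah \<in> carrier_mat r r" using Ecar[OF Ahc] .
  have EAPc: "E (A * Pr) \<in> carrier_mat n n" using Ecar Prc A by simp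
  have EDT: "transpose_mat (E D) = E D" using Etr[OF D] DT by simp
  have EAT: "transpose_mat (E (transpose_mat A)) = E A" using Etr[of "transpose_mat A" n] A by simp
  define K2h where "K2h = kron (1\<^sub>m r) D + kron Ah (1\<^sub>m r)"
  define K2 where "K2 = kron (1\<^sub>m n) D + kron A (1\<^sub>m r)"
  define Xb where "Xb = E D * Bt"
  define Q where "Q = P * (E (A * Pr) - E A) * B"
  define vIm where "vIm = vecm (1\<^sub>m m :: complex mat)"
  define vIp where "vIp = vecm (1\<^sub>m p :: complex mat)"
  define kEr where "kEr = kron (1\<^sub>m r) Ei"
  define kEn where "kEn = kron (1\<^sub>m n) Ei"
  define kP where "kP = kron P (1\<^sub>m r)"
  define kV where "kV = kron V (1\<^sub>m r)"
  define kC where "kC = kron C Ct"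
  define kCh where "kCh = kron Ch Ct"
  define kC2 where "kC2 = kron (C * E A) (Ct * E D)"
  define mK2h where "mK2h = minv K2h"
  define mK2 where "mK2 = minv K2"
  define MR where "MR = mK2 * (kron (E A * B) Xb - kron B Bt) - kron (c \<cdot>\<^sub>m (E A * B)) Xb"
  define MH where "MH = mK2h * (kron (E Ah * Bh) Xb - kron Bh Bt) - kron (c \<cdot>\<^sub>m (E Ah * Bh)) Xb"
  define ME where "ME = mK2h * kron Q Xb - kron (c \<cdot>\<^sub>m Q) Xb"
  define M where "M = kV * mK2h * kP - mK2"
  define w where "w = MR * vIm"
  have K2hc: "K2h \<in> carrier_mat (r*r) (r*r)" unfolding K2h_def using D Ahc by simp
  have K2c: "K2 \<in> carrier_mat (n*r) (n*r)" unfolding K2_def using D A by simp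
  have mK2hc: "mK2h \<in> carrier_mat (r*r) (r*r)" unfolding mK2h_def using minv_props(1)[OF K2hc] inv5 unfolding K2h_def by auto
  have mK2c: "mK2 \<in> carrier_mat (n*r) (n*r)" unfolding mK2_def using minv_props(1)[OF K2c] inv6 unfolding K2_def by auto
  have Xbc: "Xb \<in> carrier_mat r m" unfolding Xb_def using EDc Bt by simp
  have Qc: "Q \<in> carrier_mat r m" unfolding Q_def by (rule mult_carrier_mat[OF mult_carrier_mat[OF P minus_carrier_mat[OF EAc]] B])
  have vImc: "vIm \<in> carrier_mat (m*m) 1" unfolding vIm_def by simp
  have vIpc: "vIp \<in> carrier_mat (p*p) 1" unfolding vIp_def by simp
  have kErc: "kEr \<in> carrier_mat (r*r) (r*r)" unfolding kEr_def using Ei by simp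
  have kEnc: "kEn \<in> carrier_mat (n*r) (n*r)" unfolding kEn_def using Ei by simp
  have kPc: "kP \<in> carrier_mat (r*r) (n*r)" unfolding kP_def using P by simp
  have kVc: "kV \<in> carrier_mat (n*r) (r*r)" unfolding kV_def using V by simp
  have kCc: "kC \<in> carrier_mat (p*p) (n*r)" unfolding kC_def using C Ct by simp
  have kChc: "kCh \<in> carrier_mat (p*p) (r*r)" unfolding kCh_def using Chc Ct by simp
  have kC2c: "kC2 \<in> carrier_mat (p*p) (n*r)" unfolding kC2_def using C Ct EAc EDc by simp
  have MRc: "MR \<in> carrier_mat (n*r) (m*m)" unfolding MR_def using mK2c EAc B Xbc Bt by simp
  have MHc: "MH \<in> carrier_mat (r*r) (m*m)" unfolding MH_def using mK2hc EAhc Bhc Xbc Bt by simp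
  have MEc: "ME \<in> carrier_mat (r*r) (m*m)" unfolding ME_def using mK2hc Qc Xbc by simp
  have Mc: "M \<in> carrier_mat (n*r) (n*r)" unfolding M_def using kVc mK2hc kPc mK2c by simp
  have wc: "w \<in> carrier_mat (n*r) 1" unfolding w_def using MRc vImc by simp
  have main: "transpose_mat vIp * kCh * mK2h * kEr * MH * vIm - transpose_mat vIp * kC * mK2 * kEn * MR * vIm
     = transpose_mat vIp * kCh * mK2h * kEr * ME * vIm + transpose_mat vIp * kC2 * M * kEn * MR * vIm"
  proof -
    have XbT: "transpose_mat Xb = transpose_mat Bt * E D"
      unfolding Xb_def using transpose_mult[OF EDc Bt] EDT by simp
    have AhP: "Ah * P = P * (A * Pr)"
      unfolding Ah Pr using P A V by (simp add: assoc_mult_mat[of _ r n _ n _ r] assoc_mult_mat[of _ r n _ r _ n] assoc_mult_mat[of A n n V r P n])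
    have EAhP: "E Ah * P = P * E (A * Pr)"
      unfolding E by (rule Ec_intertwine[OF Ahc _ P AhP]) (use A Prc in simp)
    have Ya: "E Ah * Bh = P * E (A * Pr) * B"
      unfolding Bh using EAhP EAhc P B by (simp add: assoc_mult_mat[of _ r r _ n _ m, symmetric])
    have Qsplit: "E Ah * Bh = Q + P * E A * B"
    proof -
      have "Q = P * E (A * Pr) * B - P * E A * B" unfolding Q_def
        using P EAPc EAc B by (simp add: mult_minus_distrib_mat[of _ r n] minus_mult_distrib_mat[of _ r n])
      then show ?thesis unfolding Ya by (intro eq_matI) (use P EAPc EAc B in auto)
    qed
    have sylV': "A * V + V * D = E A * B * transpose_mat Bt * E D - B * transpose_mat Bt"
    proof (rule eq_matI)
      fix i j assume ij: "i < dim_row (E A * B * transpose_mat Bt * E D - B * transpose_mat Bt)"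
        "j < dim_col (E A * B * transpose_mat Bt * E D - B * transpose_mat Bt)"
      then have i: "i < n" and j: "j < r" using EAc B Bt EDc by auto
      have "(- (V * D) - A * V) $$ (i,j) = (B * transpose_mat Bt - E A * B * transpose_mat Bt * E D) $$ (i,j)"
        using sylV by simp
      then show "(A * V + V * D) $$ (i,j) = (E A * B * transpose_mat Bt * E D - B * transpose_mat Bt) $$ (i,j)"
        using i j A V D B Bt EAc EDc by simp (simp add: algebra_simps)
    qed (use A V D B Bt EAc EDc in auto)
    have XaG: "E A * B * transpose_mat Xb = E A * B * transpose_mat Bt * E D"
      unfolding XbT using EAc B Bt EDc by (simp add: assoc_mult_mat[of "E A * B" n m _ r _ r])
    have R_eq: "E A * B * transpose_mat Xb - B * transpose_mat Bt = A * V + V * D"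
      using sylV' XaG by simp
    have PG: "Ah + D = P * (E A * B * transpose_mat Bt * E D) - P * (B * transpose_mat Bt)"
    proof -
      have "P * (A * V + V * D) = P * (E A * B * transpose_mat Bt * E D - B * transpose_mat Bt)" using sylV' by simp
      also have "\<dots> = P * (E A * B * transpose_mat Bt * E D) - P * (B * transpose_mat Bt)"
        using P EAc B Bt EDc by (intro mult_minus_distrib_mat) auto
      finally have "P * (A * V + V * D) = P * (E A * B * transpose_mat Bt * E D) - P * (B * transpose_mat Bt)" .
      moreover have "P * (A * V + V * D) = Ah + D"
      proof -
        have "P * (A * V + V * D) = P * (A * V) + P * (V * D)" using P A V D by (intro mult_add_distrib_mat) auto
        also have "P * (A * V) = Ah" unfolding Ah using P A V by (simp add: assoc_mult_mat[of _ r n _ n _ r])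
        also have "P * (V * D) = D" using P V D PV by (simp add: assoc_mult_mat[of _ r n _ r _ r, symmetric])
        finally show ?thesis .
      qed
      ultimately show ?thesis by simp
    qed
    have L_eq: "E Ah * Bh * transpose_mat Xb - Bh * transpose_mat Bt = (Ah + D) + Q * transpose_mat Xb"
    proof -
      define M1 where "M1 = P * E (A * Pr) * B * transpose_mat Xb"
      define G where "G = E A * B * transpose_mat Bt * E D"
      have M1c: "M1 \<in> carrier_mat r r" unfolding M1_def using P EAPc B Xbc by simp
      have PGc: "P * G \<in> carrier_mat r r" unfolding G_def using P EAc B Bt EDc by simp
      have PBc: "P * (B * transpose_mat Bt) \<in> carrier_mat r r" using P B Bt by simp
      have e1: "E Ah * Bh * transpose_mat Xb = M1" unfolding M1_def Ya ..
      have e2: "Bh * transpose_mat Bt = P * (B * transpose_mat Bt)" unfolding Bh using P B Bt by (intro assoc_mult_mat[of _ r n _ m _ r]) auto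
      have e3: "Q * transpose_mat Xb = M1 - P * G"
      proof -
        have "Q = P * E (A * Pr) * B - P * E A * B" unfolding Q_def
          using P EAPc EAc B by (simp add: mult_minus_distrib_mat[of _ r n] minus_mult_distrib_mat[of _ r n])
        then have "Q * transpose_mat Xb = P * E (A * Pr) * B * transpose_mat Xb - P * E A * B * transpose_mat Xb"
          using P EAPc EAc B Xbc by (simp add: minus_mult_distrib_mat[of _ r m])
        also have "P * E A * B * transpose_mat Xb = P * G" unfolding G_def XaG[symmetric]
          using P EAc B Xbc by (simp add: assoc_mult_mat[of P r n _ n _ m] assoc_mult_mat[of P r n _ m _ r])
        finally show ?thesis unfolding M1_def .
      qed
      show ?thesis unfolding e1 e2 e3 PG G_def[symmetric]
        by (rule eq_matI) (use M1c PGc PBc in auto)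
    qed
    have RT: "Xb * transpose_mat (E A * B) - Bt * transpose_mat B = D * transpose_mat V + transpose_mat V * transpose_mat A"
    proof -
      have "transpose_mat (E A * B * transpose_mat Xb - B * transpose_mat Bt) = Xb * transpose_mat (E A * B) - Bt * transpose_mat B"
        using EAc B Xbc Bt by (intro transpose_diff_prod[of _ n m _ r]) auto
      moreover have "transpose_mat (A * V + V * D) = D * transpose_mat V + transpose_mat V * transpose_mat A"
        using A V D DT by (simp add: transpose_add[of _ n r] transpose_mult[of A n n V r] transpose_mult[of V n r D r])
          (rule eq_matI, auto)
      ultimately show ?thesis using R_eq by metis
    qed
    have LT: "Xb * transpose_mat (E Ah * Bh) - Bt * transpose_mat Bh = (D + transpose_mat Ah) + Xb * transpose_mat Q"
    proof -
      have "transpose_mat (E Ah * Bh * transpose_mat Xb - Bh * transpose_mat Bt) = Xb * transpose_mat (E Ah * Bh) - Bt * transpose_mat Bh"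
        using EAhc Bhc Xbc Bt by (intro transpose_diff_prod[of _ r m _ r]) auto
      moreover have "transpose_mat ((Ah + D) + Q * transpose_mat Xb) = (D + transpose_mat Ah) + Xb * transpose_mat Q"
      proof -
        have "transpose_mat ((Ah + D) + Q * transpose_mat Xb) = transpose_mat (Ah + D) + transpose_mat (Q * transpose_mat Xb)"
          using Ahc D Qc Xbc by (intro transpose_add[of _ r r]) auto
        also have "transpose_mat (Q * transpose_mat Xb) = Xb * transpose_mat Q" using transpose_mult[of Q r m "transpose_mat Xb" r] Qc Xbc by simp
        also have "transpose_mat (Ah + D) = D + transpose_mat Ah" using transpose_add[of Ah r r D] Ahc D DT
          by (simp add: comm_add_mat[of _ r r])
        finally show ?thesis .
      qed
      ultimately show ?thesis using L_eq by metis
    qed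
    have kvI: "\<And>X k. X \<in> carrier_mat k m \<Longrightarrow> kron X Xb * vIm = vecm (Xb * transpose_mat X)"
      unfolding vIm_def using Xbc by (intro kron_vec_I) auto
    have k1: "kron (E A * B) Xb \<in> carrier_mat (n*r) (m*m)" using EAc B Xbc by simp
    have k2: "kron B Bt \<in> carrier_mat (n*r) (m*m)" using B Bt by simp
    have k3: "kron (E Ah * Bh) Xb \<in> carrier_mat (r*r) (m*m)" using EAhc Bhc Xbc by simp
    have k4: "kron Bh Bt \<in> carrier_mat (r*r) (m*m)" using Bhc Bt by simp
    have k5: "kron (c \<cdot>\<^sub>m (E A * B)) Xb \<in> carrier_mat (n*r) (m*m)" using EAc B Xbc by simp
    have k6: "kron (c \<cdot>\<^sub>m (E Ah * Bh)) Xb \<in> carrier_mat (r*r) (m*m)" using EAhc Bhc Xbc by simp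
    have k7: "kron (c \<cdot>\<^sub>m Q) Xb \<in> carrier_mat (r*r) (m*m)" using Qc Xbc by simp
    have k8: "kron Q Xb \<in> carrier_mat (r*r) (m*m)" using Qc Xbc by simp
    have v1: "(kron (E A * B) Xb - kron B Bt) * vIm = vecm (Xb * transpose_mat (E A * B) - Bt * transpose_mat B)"
    proof -
      have "(kron (E A * B) Xb - kron B Bt) * vIm = kron (E A * B) Xb * vIm - kron B Bt * vIm"
        using k1 k2 vImc by (rule minus_mult_distrib_mat)
      also have "\<dots> = vecm (Xb * transpose_mat (E A * B)) - vecm (Bt * transpose_mat B)"
        using kvI[of "E A * B" n] EAc B unfolding vIm_def using kron_vec_I[OF B Bt] by simp
      also have "\<dots> = vecm (Xb * transpose_mat (E A * B) - Bt * transpose_mat B)"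
        using Xbc EAc B Bt by (intro vecm_minus[symmetric, of _ r n]) auto
      finally show ?thesis .
    qed
    have v2: "(kron (E Ah * Bh) Xb - kron Bh Bt) * vIm = vecm (Xb * transpose_mat (E Ah * Bh) - Bt * transpose_mat Bh)"
    proof -
      have "(kron (E Ah * Bh) Xb - kron Bh Bt) * vIm = kron (E Ah * Bh) Xb * vIm - kron Bh Bt * vIm"
        using k3 k4 vImc by (rule minus_mult_distrib_mat)
      also have "\<dots> = vecm (Xb * transpose_mat (E Ah * Bh)) - vecm (Bt * transpose_mat Bh)"
        using kvI[of "E Ah * Bh" r] EAhc Bhc unfolding vIm_def using kron_vec_I[OF Bhc Bt] by simp
      also have "\<dots> = vecm (Xb * transpose_mat (E Ah * Bh) - Bt * transpose_mat Bh)"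
        using Xbc EAhc Bhc Bt by (intro vecm_minus[symmetric, of _ r r]) auto
      finally show ?thesis .
    qed
    have vVTc: "vecm (transpose_mat V) \<in> carrier_mat (n*r) 1" using V by (simp add: mult.commute)
    have vIrc: "vecm (1\<^sub>m r :: complex mat) \<in> carrier_mat (r*r) 1" by simp
    have vXQc: "vecm (Xb * transpose_mat Q) \<in> carrier_mat (r*r) 1" using Xbc Qc by simp
    have K2V: "K2 * vecm (transpose_mat V) = vecm (D * transpose_mat V + transpose_mat V * transpose_mat A)"
      unfolding K2_def using sylv_vec[OF D A, of "transpose_mat V"] V by simp
    have K2hI: "K2h * vecm (1\<^sub>m r) = vecm (D + transpose_mat Ah)"
      unfolding K2h_def using sylv_vec[OF D Ahc, of "1\<^sub>m r"] D Ahc by simp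
    define S1 where "S1 = Xb * transpose_mat (c \<cdot>\<^sub>m (E A * B))"
    define S2 where "S2 = Xb * transpose_mat (c \<cdot>\<^sub>m Q)"
    define S3 where "S3 = Xb * transpose_mat (c \<cdot>\<^sub>m (E Ah * Bh))"
    have S1c: "S1 \<in> carrier_mat r n" unfolding S1_def using Xbc EAc B by simp
    have S2c: "S2 \<in> carrier_mat r r" unfolding S2_def using Xbc Qc by simp
    have S3c: "S3 \<in> carrier_mat r r" unfolding S3_def using Xbc EAhc Bhc by simp
    have wv: "w = vecm (transpose_mat V) - vecm S1"
    proof -
      have "w = (mK2 * (kron (E A * B) Xb - kron B Bt)) * vIm - kron (c \<cdot>\<^sub>m (E A * B)) Xb * vIm"
        unfolding w_def MR_def using mK2c k1 k2 k5 vImc by (intro minus_mult_distrib_mat[of _ "n*r" "m*m"]) auto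
      also have "(mK2 * (kron (E A * B) Xb - kron B Bt)) * vIm = mK2 * ((kron (E A * B) Xb - kron B Bt) * vIm)"
        using mK2c k1 k2 vImc by (intro assoc_mult_mat[of _ "n*r" "n*r" _ "m*m" _ 1]) auto
      also have "\<dots> = mK2 * (K2 * vecm (transpose_mat V))" unfolding v1 RT K2V ..
      also have "\<dots> = vecm (transpose_mat V)" unfolding mK2_def using minv_solve[OF K2c _ vVTc] inv6 unfolding K2_def by simp
      also have "kron (c \<cdot>\<^sub>m (E A * B)) Xb * vIm = vecm S1" unfolding S1_def using EAc B by (intro kvI[of _ n]) simp
      finally show ?thesis .
    qed
    have kPw: "kP * w = vecm (1\<^sub>m r) - vecm (S1 * transpose_mat P)"
    proof -
      have "kP * w = kP * vecm (transpose_mat V) - kP * vecm S1"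
        unfolding wv using kPc vVTc S1c by (intro mult_minus_distrib_mat[of _ "r*r" "n*r"]) (auto simp: mult.commute)
      also have "kP * vecm (transpose_mat V) = vecm (1\<^sub>m r * transpose_mat V * transpose_mat P)"
        unfolding kP_def using P V by (intro kron_vec) auto
      also have "1\<^sub>m r * transpose_mat V * transpose_mat P = 1\<^sub>m r"
      proof -
        have tVP: "transpose_mat V * transpose_mat P = 1\<^sub>m r" using transpose_mult[OF P V] PV by (metis transpose_one)
        have "1\<^sub>m r * transpose_mat V = transpose_mat V" using V by simp
        then show ?thesis using tVP by simp
      qed
      also have "kP * vecm S1 = vecm (1\<^sub>m r * S1 * transpose_mat P)"
        unfolding kP_def using P S1c by (intro kron_vec) auto
      also have "1\<^sub>m r * S1 * transpose_mat P = S1 * transpose_mat P" using S1c by simp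
      finally show ?thesis .
    qed
    have MHv: "MH * vIm = (vecm (1\<^sub>m r) + mK2h * vecm (Xb * transpose_mat Q)) - vecm S3"
    proof -
      have "MH * vIm = (mK2h * (kron (E Ah * Bh) Xb - kron Bh Bt)) * vIm - kron (c \<cdot>\<^sub>m (E Ah * Bh)) Xb * vIm"
        unfolding MH_def using mK2hc k3 k4 k6 vImc by (intro minus_mult_distrib_mat[of _ "r*r" "m*m"]) auto
      also have "(mK2h * (kron (E Ah * Bh) Xb - kron Bh Bt)) * vIm = mK2h * ((kron (E Ah * Bh) Xb - kron Bh Bt) * vIm)"
        using mK2hc k3 k4 vImc by (intro assoc_mult_mat[of _ "r*r" "r*r" _ "m*m" _ 1]) auto
      also have "(kron (E Ah * Bh) Xb - kron Bh Bt) * vIm = K2h * vecm (1\<^sub>m r) + vecm (Xb * transpose_mat Q)"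
        unfolding v2 LT K2hI using D Ahc Xbc Qc by (intro vecm_plus[of _ r r]) auto
      also have "mK2h * (K2h * vecm (1\<^sub>m r) + vecm (Xb * transpose_mat Q)) = mK2h * (K2h * vecm (1\<^sub>m r)) + mK2h * vecm (Xb * transpose_mat Q)"
        using mK2hc K2hc vIrc vXQc by (intro mult_add_distrib_mat[of _ "r*r" "r*r" _ 1]) auto
      also have "mK2h * (K2h * vecm (1\<^sub>m r)) = vecm (1\<^sub>m r)"
        unfolding mK2h_def using minv_solve[OF K2hc _ vIrc] inv5 unfolding K2h_def by simp
      also have "kron (c \<cdot>\<^sub>m (E Ah * Bh)) Xb * vIm = vecm S3" unfolding S3_def using EAhc Bhc by (intro kvI[of _ r]) simp
      finally show ?thesis .
    qed
    have MEv: "ME * vIm = mK2h * vecm (Xb * transpose_mat Q) - vecm S2"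
    proof -
      have "ME * vIm = (mK2h * kron Q Xb) * vIm - kron (c \<cdot>\<^sub>m Q) Xb * vIm"
        unfolding ME_def using mK2hc k8 k7 vImc by (intro minus_mult_distrib_mat[of _ "r*r" "m*m"]) auto
      also have "(mK2h * kron Q Xb) * vIm = mK2h * (kron Q Xb * vIm)"
        using mK2hc k8 vImc by (intro assoc_mult_mat[of _ "r*r" "r*r" _ "m*m" _ 1]) auto
      also have "kron Q Xb * vIm = vecm (Xb * transpose_mat Q)" using Qc by (intro kvI[of _ r]) simp
      also have "kron (c \<cdot>\<^sub>m Q) Xb * vIm = vecm S2" unfolding S2_def using Qc by (intro kvI[of _ r]) simp
      finally show ?thesis .
    qed
    have smat: "S3 = S2 + S1 * transpose_mat P"
    proof -
      have tQ: "transpose_mat (E Ah * Bh) = transpose_mat Q + transpose_mat (E A * B) * transpose_mat P"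
      proof -
        have "transpose_mat (E Ah * Bh) = transpose_mat (Q + P * (E A * B))"
          unfolding Qsplit using P EAc B by (simp add: assoc_mult_mat[of P r n _ n B m])
        also have "\<dots> = transpose_mat Q + transpose_mat (P * (E A * B))"
          using Qc P EAc B by (intro transpose_add[of _ r m]) auto
        also have "transpose_mat (P * (E A * B)) = transpose_mat (E A * B) * transpose_mat P"
          using P EAc B by (intro transpose_mult[of _ r n]) auto
        finally show ?thesis .
      qed
      have "S3 = c \<cdot>\<^sub>m (Xb * transpose_mat Q + Xb * transpose_mat (E A * B) * transpose_mat P)"
        unfolding S3_def transpose_smult tQ using Xbc Qc EAc B P
        by (simp add: mult_smult_distrib[of Xb r m] mult_add_distrib_mat[of Xb r m] assoc_mult_mat[of Xb r m _ n _ r])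
      moreover have "S2 = c \<cdot>\<^sub>m (Xb * transpose_mat Q)" unfolding S2_def transpose_smult using Xbc Qc
        by (simp add: mult_smult_distrib[of Xb r m])
      moreover have "S1 * transpose_mat P = c \<cdot>\<^sub>m (Xb * transpose_mat (E A * B) * transpose_mat P)" unfolding S1_def transpose_smult using Xbc EAc B P
        by (simp add: mult_smult_distrib[of Xb r m] mult_smult_assoc_mat[of _ r n _ r])
      ultimately show ?thesis using Xbc Qc EAc B P by (intro eq_matI) (auto simp: algebra_simps)
    qed
    have claimA: "MH * vIm = ME * vIm + kP * w"
    proof -
      have v3: "vecm S3 = vecm S2 + vecm (S1 * transpose_mat P)" unfolding smat using S2c S1c P by (intro vecm_plus[of _ r r]) auto
      have c1: "vecm S2 \<in> carrier_mat (r*r) 1" using S2c by simp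
      have c2: "vecm (S1 * transpose_mat P) \<in> carrier_mat (r*r) 1" using S1c P by simp
      have c3: "mK2h * vecm (Xb * transpose_mat Q) \<in> carrier_mat (r*r) 1" using mK2hc vXQc by simp
      show ?thesis unfolding MHv MEv kPw v3 by (rule eq_matI) (use c1 c2 c3 vIrc in auto)
    qed
    define Y where "Y = E D * transpose_mat Ct"
    define WV where "WV = transpose_mat W * V"
    have Yc: "Y \<in> carrier_mat r p" unfolding Y_def using EDc Ct by simp
    have WVc: "WV \<in> carrier_mat r r" unfolding WV_def using W V by simp
    have EATc: "E (transpose_mat A) \<in> carrier_mat n n" using Ecar A by simp
    have sylT: "- (D * transpose_mat W) - transpose_mat W * A = transpose_mat Ct * C - Y * C * E A"
    proof -
      have "transpose_mat (- (W * D) - transpose_mat A * W) = - (D * transpose_mat W) - transpose_mat W * A"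
      proof -
        have t1: "transpose_mat (W * D) = D * transpose_mat W" using transpose_mult[of W n r D r] W D DT by simp
        have t2: "transpose_mat (transpose_mat A * W) = transpose_mat W * A" using transpose_mult[of "transpose_mat A" n n W r] W A by simp
        have "transpose_mat (- (W * D) - transpose_mat A * W) = - transpose_mat (W * D) - transpose_mat (transpose_mat A * W)"
          by (rule eq_matI) (use W D A in auto)
        then show ?thesis unfolding t1 t2 .
      qed
      moreover have "transpose_mat (transpose_mat C * Ct - E (transpose_mat A) * transpose_mat C * Ct * E D)
         = transpose_mat Ct * C - Y * C * E A"
        unfolding Y_def using C Ct EATc EDc
        by (simp add: transpose_minus[of _ n r] transpose_mult[of "transpose_mat C" n p Ct r]
          transpose4[of "E (transpose_mat A)" n n "transpose_mat C" p Ct r "E D" r] EDT EAT)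
      ultimately show ?thesis using sylW by metis
    qed
    define Z0 where "Z0 = D * transpose_mat W + transpose_mat W * A"
    have Z0c: "Z0 \<in> carrier_mat r n" unfolding Z0_def using D W A by simp
    have sylW': "Y * C * E A = transpose_mat Ct * C + Z0"
    proof (rule eq_matI)
      fix i j assume "i < dim_row (transpose_mat Ct * C + Z0)" "j < dim_col (transpose_mat Ct * C + Z0)"
      then have i: "i < r" and j: "j < n" using Ct C Z0c by auto
      have "(- (D * transpose_mat W) - transpose_mat W * A) $$ (i,j) = (transpose_mat Ct * C - Y * C * E A) $$ (i,j)"
        using sylT by simp
      then show "(Y * C * E A) $$ (i,j) = (transpose_mat Ct * C + Z0) $$ (i,j)"
        unfolding Z0_def using i j A W D C Ct Yc EAc by simp (simp add: algebra_simps)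
    qed (use A W D C Ct Yc EAc Z0c in auto)
    define g where "g = vecm (transpose_mat W)"
    have gc: "g \<in> carrier_mat (n*r) 1" unfolding g_def using W by (simp add: mult.commute)
    have vZ0c: "vecm Z0 \<in> carrier_mat (n*r) 1" using Z0c by (simp add: mult.commute)
    have vCCc: "vecm (transpose_mat Ct * C) \<in> carrier_mat (n*r) 1" using Ct C by (simp add: mult.commute)
    have rho1: "transpose_mat vIp * kC = transpose_mat (vecm (transpose_mat Ct * C))"
    proof -
      have "transpose_mat vIp * kC = transpose_mat (transpose_mat kC * vIp)" by (rule row_transpose[OF vIpc kCc])
      also have "transpose_mat kC * vIp = vecm (transpose_mat Ct * C)"
        unfolding kC_def vIp_def kron_transpose[OF C Ct] using C Ct
        by (simp add: kron_vec_I[of "transpose_mat C" n p "transpose_mat Ct" r])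
      finally show ?thesis .
    qed
    have rho2: "transpose_mat vIp * kC2 = transpose_mat (vecm (Y * C * E A))"
    proof -
      have "transpose_mat vIp * kC2 = transpose_mat (transpose_mat kC2 * vIp)" by (rule row_transpose[OF vIpc kC2c])
      also have "transpose_mat kC2 * vIp = vecm (transpose_mat (Ct * E D) * (C * E A))"
      proof -
        have "transpose_mat kC2 = kron (transpose_mat (C * E A)) (transpose_mat (Ct * E D))"
          unfolding kC2_def using C Ct EAc EDc by (intro kron_transpose[of _ p n _ p r]) auto
        then show ?thesis unfolding vIp_def using C Ct EAc EDc
          by (simp add: kron_vec_I[of "transpose_mat (C * E A)" n p "transpose_mat (Ct * E D)" r])
      qed
      also have "transpose_mat (Ct * E D) * (C * E A) = Y * C * E A"
        unfolding Y_def using Ct EDc C EAc transpose_mult[of Ct p r "E D" r] EDT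
        by (simp add: assoc_mult_mat[of "E D * transpose_mat Ct" r p C n "E A" n])
      finally show ?thesis .
    qed
    have K2T: "transpose_mat K2 = kron (1\<^sub>m n) D + kron (transpose_mat A) (1\<^sub>m r)"
      unfolding K2_def using D A DT
      by (simp add: transpose_add[of _ "n*r" "n*r"] kron_transpose[of "1\<^sub>m n" n n D r r] kron_transpose[of A n n "1\<^sub>m r" r r])
    have K2Tg: "transpose_mat K2 * g = vecm Z0"
      unfolding K2T g_def Z0_def using sylv_vec[OF D, of "transpose_mat A" n "transpose_mat W"] A W by simp
    have gK2: "transpose_mat g * K2 = transpose_mat (vecm Z0)"
      using row_transpose[OF gc K2c] K2Tg by simp
    define gt where "gt = transpose_mat g"
    have gtc: "gt \<in> carrier_mat 1 (n*r)" unfolding gt_def using gc by simp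
    have rho2': "transpose_mat vIp * kC2 = transpose_mat vIp * kC + gt * K2"
    proof -
      have "vecm (Y * C * E A) = vecm (transpose_mat Ct * C) + vecm Z0"
        unfolding sylW' using Ct C Z0c by (intro vecm_plus[of _ r n]) auto
      then have "transpose_mat vIp * kC2 = transpose_mat (vecm (transpose_mat Ct * C) + vecm Z0)" unfolding rho2 by simp
      also have "\<dots> = transpose_mat (vecm (transpose_mat Ct * C)) + transpose_mat (vecm Z0)"
        using vCCc vZ0c by (intro transpose_add[of _ "n*r" 1]) auto
      finally show ?thesis unfolding rho1 gK2[symmetric] gt_def .
    qed
    have WVAh: "WV * Ah = transpose_mat W * A * V"
    proof -
      have "WV * Ah = (transpose_mat W * V * P) * A * V"
        unfolding WV_def Ah using W V P A
        by (simp add: assoc_mult_mat[of "transpose_mat W * V" r r P n A n] assoc_mult_mat[of "transpose_mat W * V" r r "P * A" n V r]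
            assoc_mult_mat[of "transpose_mat W * V * P" r n A n V r])
      then show ?thesis using WVP by simp
    qed
    have Z0V: "Z0 * V = D * WV + WV * Ah"
      unfolding WVAh unfolding WV_def Z0_def using D W A V
      by (simp add: add_mult_distrib_mat[of _ r n] assoc_mult_mat[of D r r "transpose_mat W" n V r])
    have vWVc: "vecm WV \<in> carrier_mat (r*r) 1" using WVc by simp
    have K2hT: "transpose_mat K2h = kron (1\<^sub>m r) D + kron (transpose_mat Ah) (1\<^sub>m r)"
      unfolding K2h_def using D Ahc DT
      by (simp add: transpose_add[of _ "r*r" "r*r"] kron_transpose[of "1\<^sub>m r" r r D r r] kron_transpose[of Ah r r "1\<^sub>m r" r r])
    have gK2kV: "gt * K2 * kV = transpose_mat (vecm WV) * K2h"
    proof -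
      have "gt * K2 * kV = transpose_mat (vecm Z0) * kV" unfolding gt_def gK2 ..
      also have "\<dots> = transpose_mat (transpose_mat kV * vecm Z0)" by (rule row_transpose[OF vZ0c kVc])
      also have "transpose_mat kV * vecm Z0 = vecm (1\<^sub>m r * Z0 * V)"
        unfolding kV_def kron_transpose[OF V, of "1\<^sub>m r" r r, simplified]
        using kron_vec[of "transpose_mat V" r n "1\<^sub>m r" r r Z0] V Z0c by simp
      also have "1\<^sub>m r * Z0 * V = D * WV + WV * Ah" using Z0c Z0V by simp
      also have "vecm (D * WV + WV * Ah) = transpose_mat K2h * vecm WV"
        unfolding K2hT using sylv_vec[OF D, of "transpose_mat Ah" r WV] Ahc WVc by simp
      also have "transpose_mat (transpose_mat K2h * vecm WV) = transpose_mat (vecm WV) * K2h"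
        using row_transpose[OF vWVc K2hc] by simp
      finally show ?thesis .
    qed
    have K2hm: "K2h * mK2h = 1\<^sub>m (r*r)" unfolding mK2h_def using minv_props(2)[OF K2hc] inv5 unfolding K2h_def by simp
    have K2m: "K2 * mK2 = 1\<^sub>m (n*r)" unfolding mK2_def using minv_props(2)[OF K2c] inv6 unfolding K2_def by simp
    have WVkP: "transpose_mat (vecm WV) * kP = gt"
    proof -
      have "transpose_mat (vecm WV) * kP = transpose_mat (transpose_mat kP * vecm WV)" by (rule row_transpose[OF vWVc kPc])
      also have "transpose_mat kP * vecm WV = vecm (1\<^sub>m r * WV * P)"
        unfolding kP_def kron_transpose[OF P, of "1\<^sub>m r" r r, simplified]
        using kron_vec[of "transpose_mat P" n r "1\<^sub>m r" r r WV] P WVc by simp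
      also have "1\<^sub>m r * WV * P = transpose_mat W" unfolding WV_def using WVP W V by simp
      finally show ?thesis unfolding gt_def g_def .
    qed
    have gKM: "gt * K2 * M = 0\<^sub>m 1 (n*r)"
    proof -
      have "gt * K2 * M = gt * K2 * (kV * mK2h * kP) - gt * K2 * mK2"
        unfolding M_def using gtc K2c kVc mK2hc kPc mK2c by (intro mult_minus_distrib_mat[of _ 1 "n*r"]) auto
      also have "gt * K2 * (kV * mK2h * kP) = gt * K2 * kV * mK2h * kP"
        using gtc K2c kVc mK2hc kPc by (simp add: assoc_mult_mat)
      also have "\<dots> = transpose_mat (vecm WV) * (K2h * mK2h) * kP"
        unfolding gK2kV using vWVc K2hc mK2hc by (simp add: assoc_mult_mat[of _ 1 "r*r" _ "r*r" _ "r*r"])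
      also have "\<dots> = gt" unfolding K2hm using vWVc WVkP by simp
      also have "gt * K2 * mK2 = gt" using gtc K2c mK2c K2m by (simp add: assoc_mult_mat[of _ 1 "n*r" _ "n*r" _ "n*r"])
      finally have "gt * K2 * M = gt - gt" .
      also have "gt - gt = 0\<^sub>m 1 (n*r)" by (rule eq_matI) (use gtc in auto)
      finally show ?thesis .
    qed
    have claimC: "transpose_mat vIp * kC2 * M = transpose_mat vIp * kC * M"
    proof -
      have "transpose_mat vIp * kC2 * M = (transpose_mat vIp * kC + gt * K2) * M" unfolding rho2' ..
      also have "\<dots> = transpose_mat vIp * kC * M + gt * K2 * M"
        using vIpc kCc gtc K2c Mc by (intro add_mult_distrib_mat[of _ 1 "n*r"]) auto
      also have "\<dots> = transpose_mat vIp * kC * M" unfolding gKM by (rule eq_matI) (use vIpc kCc Mc in auto)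
      finally show ?thesis .
    qed
    have kChe: "kCh = kC * kV"
      unfolding kCh_def kC_def kV_def Ch using kron_mult[OF C Ct V, of "1\<^sub>m r" r] Ct by simp
    have EPe: "kEr * kP = kP * kEn"
    proof -
      have "kEr * kP = kron (1\<^sub>m r * P) (Ei * 1\<^sub>m r)" unfolding kEr_def kP_def using Ei P by (intro kron_mult[of _ r r _ r r]) auto
      moreover have "kP * kEn = kron (P * 1\<^sub>m n) (1\<^sub>m r * Ei)" unfolding kEn_def kP_def using Ei P by (intro kron_mult[of _ r n _ r r]) auto
      ultimately show ?thesis using P Ei by simp
    qed
    have EPw: "kEr * (kP * w) = kP * (kEn * w)"
      using EPe kErc kPc kEnc wc by (simp add: assoc_mult_mat[of _ "r*r" "r*r" _ "n*r" _ 1, symmetric] assoc_mult_mat[of kP "r*r" "n*r" _ "n*r" _ 1])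
    define rL where "rL = transpose_mat vIp * kCh * mK2h * kEr"
    define r1 where "r1 = transpose_mat vIp * kC"
    have rLc: "rL \<in> carrier_mat 1 (r*r)" unfolding rL_def using vIpc kChc mK2hc kErc by simp
    have r1c: "r1 \<in> carrier_mat 1 (n*r)" unfolding r1_def using vIpc kCc by simp
    have claimB: "rL * (kP * w) = r1 * (kV * mK2h * kP) * kEn * w"
      unfolding rL_def r1_def kChe using vIpc kCc kVc mK2hc kErc kPc kEnc wc
      by (simp add: assoc_mult_mat EPw)
    define s1 where "s1 = rL * (ME * vIm)"
    define s2 where "s2 = rL * (kP * w)"
    define s3 where "s3 = r1 * mK2 * kEn * w"
    define s4 where "s4 = r1 * M * kEn * w"
    have s1c: "s1 \<in> carrier_mat 1 1" unfolding s1_def using rLc MEc vImc by simp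
    have s2c: "s2 \<in> carrier_mat 1 1" unfolding s2_def using rLc kPc wc by simp
    have s3c: "s3 \<in> carrier_mat 1 1" unfolding s3_def using r1c mK2c kEnc wc by simp
    have T1: "transpose_mat vIp * kCh * mK2h * kEr * MH * vIm = s1 + s2"
    proof -
      have "transpose_mat vIp * kCh * mK2h * kEr * MH * vIm = rL * (MH * vIm)"
        unfolding rL_def using rLc[unfolded rL_def] MHc vImc by (intro assoc_mult_mat[of _ 1 "r*r" _ "m*m" _ 1]) auto
      also have "\<dots> = rL * (ME * vIm) + rL * (kP * w)" unfolding claimA
        using rLc MEc vImc kPc wc by (intro mult_add_distrib_mat[of _ 1 "r*r" _ 1]) auto
      finally show ?thesis unfolding s1_def s2_def .
    qed
    have T2: "transpose_mat vIp * kC * mK2 * kEn * MR * vIm = s3"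
      unfolding s3_def w_def r1_def using vIpc kCc mK2c kEnc MRc vImc
      by (simp add: assoc_mult_mat[of _ 1 "n*r" _ "m*m" _ 1])
    have T3: "transpose_mat vIp * kCh * mK2h * kEr * ME * vIm = s1"
      unfolding s1_def rL_def using vIpc kChc mK2hc kErc MEc vImc
      by (simp add: assoc_mult_mat[of _ 1 "r*r" _ "m*m" _ 1])
    have T4: "transpose_mat vIp * kC2 * M * kEn * MR * vIm = s4"
    proof -
      have "transpose_mat vIp * kC2 * M * kEn * MR * vIm = transpose_mat vIp * kC2 * M * kEn * w"
        unfolding w_def using vIpc kC2c Mc kEnc MRc vImc
        by (simp add: assoc_mult_mat[of _ 1 "n*r" _ "m*m" _ 1])
      then show ?thesis unfolding s4_def r1_def claimC .
    qed
    have T5: "s2 - s3 = s4"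
    proof -
      have "s4 = r1 * (kV * mK2h * kP) * kEn * w - r1 * mK2 * kEn * w"
      proof -
        have "r1 * M = r1 * (kV * mK2h * kP) - r1 * mK2"
          unfolding M_def using r1c kVc mK2hc kPc mK2c by (intro mult_minus_distrib_mat[of _ 1 "n*r"]) auto
        then have "r1 * M * kEn = r1 * (kV * mK2h * kP) * kEn - r1 * mK2 * kEn"
          using r1c kVc mK2hc kPc mK2c kEnc by (simp add: minus_mult_distrib_mat[of _ 1 "n*r" _ _ "n*r"])
        then show ?thesis unfolding s4_def
          using r1c kVc mK2hc kPc mK2c kEnc wc by (simp add: minus_mult_distrib_mat[of _ 1 "n*r" _ _ 1])
      qed
      then show ?thesis unfolding s2_def s3_def claimB by simp
    qed
    show ?thesis unfolding T1 T2 T3 T4 T5[symmetric]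
      by (rule eq_matI) (use s1c s2c s3c in auto)
  qed
  from main show ?thesis
    unfolding K2h_def K2_def Xb_def Q_def vIm_def vIp_def kEr_def kEn_def kP_def kV_def kC_def kCh_def kC2_def
      mK2h_def mK2_def MR_def MH_def ME_def M_def .
qed

theorem theorem3p3:
  fixes A0 B0 C0 :: "real mat" and n m p r :: nat and T :: real
    and lam :: "nat \<Rightarrow> complex" and S V W Ah Bh Ch :: "complex mat"
  defines "A \<equiv> cmat A0" and "B \<equiv> cmat B0" and "C \<equiv> cmat C0"
    and "D \<equiv> diagm r lam"
  defines "Bt \<equiv> S * Bh" and "Ct \<equiv> Ch * minv S"
    and "WV \<equiv> transpose_mat W * V"
  defines "Pr \<equiv> V * minv WV * transpose_mat W"
    and "eT \<equiv> \<lambda>X. mexp (complex_of_real T \<cdot>\<^sub>m X)"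
    and "Ir \<equiv> (1\<^sub>m r :: complex mat)" and "In \<equiv> (1\<^sub>m n :: complex mat)"
  defines "K2h \<equiv> kron Ir D + kron Ah Ir" and "K2 \<equiv> kron In D + kron A Ir"
  assumes A0: "A0 \<in> carrier_mat n n" and B0: "B0 \<in> carrier_mat n m"
    and C0: "C0 \<in> carrier_mat p n" and T: "T > 0"
    and S: "S \<in> carrier_mat r r" and Sinv: "invertible_mat S"
    and V: "V \<in> carrier_mat n r" and W: "W \<in> carrier_mat n r"
    and Ah: "Ah \<in> carrier_mat r r" and Bh: "Bh \<in> carrier_mat r m" and Ch: "Ch \<in> carrier_mat p r"
    and Ah_diag: "Ah = minv S * D * S"
    and sylV: "- (V * D) - A * V = B * transpose_mat Bt - eT A * B * transpose_mat Bt * eT D"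
    and sylW: "- (W * D) - transpose_mat A * W
               = transpose_mat C * Ct - eT (transpose_mat A) * transpose_mat C * Ct * eT D"
    and WVinv: "invertible_mat WV"
    and Ah_eq: "Ah = minv WV * transpose_mat W * A * V"
    and Bh_eq: "Bh = minv WV * transpose_mat W * B"
    and Ch_eq: "Ch = C * V"
    and inv1: "invertible_mat (kron Ir Ah + kron D Ir)"
    and inv2: "invertible_mat (kron Ir A + kron D In)"
    and inv3: "invertible_mat (kron Ir D + kron (transpose_mat Ah) Ir)"
    and inv4: "invertible_mat (kron In D + kron (transpose_mat A) Ir)"
    and inv5: "invertible_mat K2h" and inv6: "invertible_mat K2"
  shows
   "(kron Ir Ch * minv (kron Ir Ah + kron D Ir)
        * (kron (eT D * Bt) (eT Ah * Bh) - kron Bt Bh) * vecm (1\<^sub>m m)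
    - kron Ir C * minv (kron Ir A + kron D In)
        * (kron (eT D * Bt) (eT A * B) - kron Bt B) * vecm (1\<^sub>m m)
    = kron Ir Ch * minv (kron Ir Ah + kron D Ir)
        * kron (eT D * Bt) (minv WV * transpose_mat W * (eT (A * Pr) - eT A) * B) * vecm (1\<^sub>m m))
  \<and> (kron (transpose_mat Bh) Ir * minv (kron Ir D + kron (transpose_mat Ah) Ir)
        * (kron (eT (transpose_mat Ah) * transpose_mat Ch) (eT D * transpose_mat Ct)
           - kron (transpose_mat Ch) (transpose_mat Ct)) * vecm (1\<^sub>m p)
    - kron (transpose_mat B) Ir * minv (kron In D + kron (transpose_mat A) Ir)
        * (kron (eT (transpose_mat A) * transpose_mat C) (eT D * transpose_mat Ct)
           - kron (transpose_mat C) (transpose_mat Ct)) * vecm (1\<^sub>m p)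
    = kron (transpose_mat Bh) Ir * minv (kron Ir D + kron (transpose_mat Ah) Ir)
        * kron (transpose_mat V * (eT (transpose_mat A * transpose_mat Pr) - eT (transpose_mat A))
                  * transpose_mat C) (eT D * transpose_mat Ct) * vecm (1\<^sub>m p))
  \<and> (\<forall>i<r.
     transpose_mat (vecm (1\<^sub>m p)) * kron Ch Ct * minv K2h
        * kron Ir (unitcol r i * transpose_mat (unitcol r i))
        * (minv K2h * (kron (eT Ah * Bh) (eT D * Bt) - kron Bh Bt)
           - kron (complex_of_real T \<cdot>\<^sub>m (eT Ah * Bh)) (eT D * Bt)) * vecm (1\<^sub>m m)
   - transpose_mat (vecm (1\<^sub>m p)) * kron C Ct * minv K2
        * kron In (unitcol r i * transpose_mat (unitcol r i))
        * (minv K2 * (kron (eT A * B) (eT D * Bt) - kron B Bt)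
           - kron (complex_of_real T \<cdot>\<^sub>m (eT A * B)) (eT D * Bt)) * vecm (1\<^sub>m m)
   = transpose_mat (vecm (1\<^sub>m p)) * kron Ch Ct * minv K2h
        * kron Ir (unitcol r i * transpose_mat (unitcol r i))
        * (minv K2h * kron (minv WV * transpose_mat W * (eT (A * Pr) - eT A) * B) (eT D * Bt)
           - kron (complex_of_real T \<cdot>\<^sub>m (minv WV * transpose_mat W * (eT (A * Pr) - eT A) * B))
                  (eT D * Bt)) * vecm (1\<^sub>m m)
   + transpose_mat (vecm (1\<^sub>m p)) * kron (C * eT A) (Ct * eT D)
        * (kron V Ir * minv K2h * kron (minv WV * transpose_mat W) Ir - minv K2)
        * kron In (unitcol r i * transpose_mat (unitcol r i))
        * (minv K2 * (kron (eT A * B) (eT D * Bt) - kron B Bt)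
           - kron (complex_of_real T \<cdot>\<^sub>m (eT A * B)) (eT D * Bt)) * vecm (1\<^sub>m m))"
proof -
  have Ac: "A \<in> carrier_mat n n" unfolding A_def using A0 by simp
  have Bc: "B \<in> carrier_mat n m" unfolding B_def using B0 by simp
  have Cc: "C \<in> carrier_mat p n" unfolding C_def using C0 by simp
  have Dc: "D \<in> carrier_mat r r" unfolding D_def diagm_def by simp
  have DT: "transpose_mat D = D" unfolding D_def diagm_def by (rule eq_matI) auto
  have Edef: "eT = (\<lambda>X. mexp (complex_of_real T \<cdot>\<^sub>m X))" unfolding eT_def ..
  have mSc: "minv S \<in> carrier_mat r r" using minv_props(1)[OF S Sinv] .
  have Btc: "Bt \<in> carrier_mat r m" unfolding Bt_def using S Bh by simp
  have Ctc: "Ct \<in> carrier_mat p r" unfolding Ct_def using Ch mSc by simp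
  have WVc: "WV \<in> carrier_mat r r" unfolding WV_def using W V by simp
  have mWV: "minv WV \<in> carrier_mat r r" "WV * minv WV = 1\<^sub>m r" "minv WV * WV = 1\<^sub>m r"
    using minv_props[OF WVc WVinv] by auto
  define P where "P = minv WV * transpose_mat W"
  have Pc: "P \<in> carrier_mat r n" unfolding P_def using mWV W by simp
  have PV: "P * V = 1\<^sub>m r"
    unfolding P_def using mWV W V by (simp add: assoc_mult_mat[of "minv WV" r r _ n V r] WV_def[symmetric])
  have WVP: "transpose_mat W * V * P = transpose_mat W"
    unfolding P_def WV_def[symmetric] using mWV W WVc by (simp add: assoc_mult_mat[of WV r r _ r _ n, symmetric])
  have PrP: "Pr = V * P" unfolding Pr_def P_def using V mWV W by (simp add: assoc_mult_mat[of V n r _ r _ n])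
  have AhP: "Ah = P * A * V" unfolding P_def by (rule Ah_eq)
  have BhP: "Bh = P * B" unfolding P_def by (rule Bh_eq)
  note inv1' = inv1[unfolded Ir_def] and inv2' = inv2[unfolded Ir_def In_def]
  note inv3' = inv3[unfolded Ir_def] and inv4' = inv4[unfolded Ir_def In_def]
  note inv5' = inv5[unfolded K2h_def Ir_def] and inv6' = inv6[unfolded K2_def Ir_def In_def]
  note ga = part_a[OF Edef Ac Bc Cc V Dc Btc Pc DT PV PrP AhP BhP Ch_eq sylV inv1' inv2', unfolded P_def]
  note gb = part_b[OF Edef Ac Bc Cc V W Dc Ctc Pc DT PV WVP PrP AhP BhP Ch_eq sylW inv3' inv4', unfolded P_def]
  have gc: "\<forall>i<r.
     transpose_mat (vecm (1\<^sub>m p)) * kron Ch Ct * minv (kron (1\<^sub>m r) D + kron Ah (1\<^sub>m r))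
        * kron (1\<^sub>m r) (unitcol r i * transpose_mat (unitcol r i))
        * (minv (kron (1\<^sub>m r) D + kron Ah (1\<^sub>m r)) * (kron (eT Ah * Bh) (eT D * Bt) - kron Bh Bt)
           - kron (complex_of_real T \<cdot>\<^sub>m (eT Ah * Bh)) (eT D * Bt)) * vecm (1\<^sub>m m)
   - transpose_mat (vecm (1\<^sub>m p)) * kron C Ct * minv (kron (1\<^sub>m n) D + kron A (1\<^sub>m r))
        * kron (1\<^sub>m n) (unitcol r i * transpose_mat (unitcol r i))
        * (minv (kron (1\<^sub>m n) D + kron A (1\<^sub>m r)) * (kron (eT A * B) (eT D * Bt) - kron B Bt)
           - kron (complex_of_real T \<cdot>\<^sub>m (eT A * B)) (eT D * Bt)) * vecm (1\<^sub>m m)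
   = transpose_mat (vecm (1\<^sub>m p)) * kron Ch Ct * minv (kron (1\<^sub>m r) D + kron Ah (1\<^sub>m r))
        * kron (1\<^sub>m r) (unitcol r i * transpose_mat (unitcol r i))
        * (minv (kron (1\<^sub>m r) D + kron Ah (1\<^sub>m r)) * kron (minv WV * transpose_mat W * (eT (A * Pr) - eT A) * B) (eT D * Bt)
           - kron (complex_of_real T \<cdot>\<^sub>m (minv WV * transpose_mat W * (eT (A * Pr) - eT A) * B))
                  (eT D * Bt)) * vecm (1\<^sub>m m)
   + transpose_mat (vecm (1\<^sub>m p)) * kron (C * eT A) (Ct * eT D)
        * (kron V (1\<^sub>m r) * minv (kron (1\<^sub>m r) D + kron Ah (1\<^sub>m r)) * kron (minv WV * transpose_mat W) (1\<^sub>m r) - minv (kron (1\<^sub>m n) D + kron A (1\<^sub>m r)))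
        * kron (1\<^sub>m n) (unitcol r i * transpose_mat (unitcol r i))
        * (minv (kron (1\<^sub>m n) D + kron A (1\<^sub>m r)) * (kron (eT A * B) (eT D * Bt) - kron B Bt)
           - kron (complex_of_real T \<cdot>\<^sub>m (eT A * B)) (eT D * Bt)) * vecm (1\<^sub>m m)"
  proof (intro allI impI)
    fix i assume "i < r"
    have Eic: "unitcol r i * transpose_mat (unitcol r i) \<in> carrier_mat r r" unfolding unitcol_def by simp
    show "transpose_mat (vecm (1\<^sub>m p)) * kron Ch Ct * minv (kron (1\<^sub>m r) D + kron Ah (1\<^sub>m r))
        * kron (1\<^sub>m r) (unitcol r i * transpose_mat (unitcol r i))
        * (minv (kron (1\<^sub>m r) D + kron Ah (1\<^sub>m r)) * (kron (eT Ah * Bh) (eT D * Bt) - kron Bh Bt)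
           - kron (complex_of_real T \<cdot>\<^sub>m (eT Ah * Bh)) (eT D * Bt)) * vecm (1\<^sub>m m)
   - transpose_mat (vecm (1\<^sub>m p)) * kron C Ct * minv (kron (1\<^sub>m n) D + kron A (1\<^sub>m r))
        * kron (1\<^sub>m n) (unitcol r i * transpose_mat (unitcol r i))
        * (minv (kron (1\<^sub>m n) D + kron A (1\<^sub>m r)) * (kron (eT A * B) (eT D * Bt) - kron B Bt)
           - kron (complex_of_real T \<cdot>\<^sub>m (eT A * B)) (eT D * Bt)) * vecm (1\<^sub>m m)
   = transpose_mat (vecm (1\<^sub>m p)) * kron Ch Ct * minv (kron (1\<^sub>m r) D + kron Ah (1\<^sub>m r))
        * kron (1\<^sub>m r) (unitcol r i * transpose_mat (unitcol r i))
        * (minv (kron (1\<^sub>m r) D + kron Ah (1\<^sub>m r)) * kron (minv WV * transpose_mat W * (eT (A * Pr) - eT A) * B) (eT D * Bt)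
           - kron (complex_of_real T \<cdot>\<^sub>m (minv WV * transpose_mat W * (eT (A * Pr) - eT A) * B))
                  (eT D * Bt)) * vecm (1\<^sub>m m)
   + transpose_mat (vecm (1\<^sub>m p)) * kron (C * eT A) (Ct * eT D)
        * (kron V (1\<^sub>m r) * minv (kron (1\<^sub>m r) D + kron Ah (1\<^sub>m r)) * kron (minv WV * transpose_mat W) (1\<^sub>m r) - minv (kron (1\<^sub>m n) D + kron A (1\<^sub>m r)))
        * kron (1\<^sub>m n) (unitcol r i * transpose_mat (unitcol r i))
        * (minv (kron (1\<^sub>m n) D + kron A (1\<^sub>m r)) * (kron (eT A * B) (eT D * Bt) - kron B Bt)
           - kron (complex_of_real T \<cdot>\<^sub>m (eT A * B)) (eT D * Bt)) * vecm (1\<^sub>m m)"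
      using part_c[OF Edef Ac Bc Cc V W Dc Btc Ctc Pc Eic DT PV WVP PrP AhP BhP Ch_eq sylV sylW inv5' inv6']
      unfolding P_def .
  qed
  show ?thesis unfolding K2h_def K2_def Ir_def In_def
    using ga gb gc by (intro conjI)
qed

end
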